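(* Let $q$ be a prime power and let $k,u,h$ be positive integers with $u\ge 2$, $k\ge hu$, $q^k-q^{k-1}>h(q^u-1)$ and $i_h+u>\sum_{i=1}^{k-u}\lfloor h/q^i\rfloor$. For $i=1,\dots,h$ let $U_i=\langle \mathbf e_{(i-1)u+1},\dots,\mathbf e_{iu}\rangle\subseteq\mathbf F_q^k$, where $\mathbf e_j$ is the $j$-th standard basis vector. Let $U$ be the set of nonzero vectors of $\mathbf F_q^k$ not lying in $U_1\cup\cdots\cup U_h$, let $\widetilde G$ be a $k\times\frac{|U|}{q-1}$ matrix whose columns consist of exactly one representative of each class $\{\lambda\mathbf v:\lambda\in\mathbf F_q^*\}$, $\mathbf v\in U$, and let $\mathbf C_1$ be the linear code over $\mathbf F_q$ with generator matrix $\widetilde G$. Then $\mathbf C_1$ is a distance-optimal linear $[n,k,d]_q$ code with $$n=\frac{(q^k-1)-h(q^u-1)}{q-1},\qquad d=q^{k-1}-hq^{u-1},$$ and: (a) the weight distribution of $\mathbf C_1$ is: weight $0$ with multiplicity $1$; weight $q^{k-1}$ with multiplicity $q^{k-hu}-1$; and, for each $j=1,\dots,h$, weight $q^{k-1}-jq^{u-1}$ with multiplicity $\binom{h}{j}(q^u-1)^{j}q^{k-hu}$ (so weight $q^{k-1}-hq^{u-1}$ has multiplicity $(q^u-1)^hq^{k-hu}$, weight $q^{k-1}-(h-1)q^{u-1}$ has multiplicity $h(q^u-1)^{h-1}q^{k-hu}$, ..., weight $q^{k-1}-q^{u-1}$ has multiplicity $h(q^u-1)q^{k-hu}$); (b)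 the generalized Hamming weights of $\mathbf C_1$ are $$d_r(\mathbf C_1)=\begin{cases}\dfrac{(q^k-q^{k-r})-h(q^u-q^{u-r})}{q-1}, & 1\le r\le u,\\[2mm] \dfrac{(q^k-q^{k-r})-h(q^u-1)}{q-1}, & u\le r\le k.\end{cases}$$
   Context: For a positive integer $h$ with $q$-adic expansion $h=h_{m-1}q^{m-1}+\dots+h_0$ ($0\le h_i<q$), $i_h$ denotes the least index $i\ge 0$ with $h_i>0$. A linear $[n,k,d]_q$ code is distance optimal if no linear $[n,k,d+1]_q$ code exists. The weight distribution lists, for each weight $w$, the number of codewords of Hamming weight $w$. The support of a subcode $D$ is the set of coordinates where some codeword of $D$ is nonzero; the $r$-th generalized Hamming weight $d_r(\mathbf C)$ is the minimum support size of an $r$-dimensional subcode of $\mathbf C$. *)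

theory Defs
  imports Complex_Main
begin

text \<open>Vectors of length n over a field are modelled as functions nat => 'a vanishing
  at all indices >= n.\<close>

definition vecs :: "nat \<Rightarrow> (nat \<Rightarrow> 'a::zero) set" where
  "vecs n = {v. \<forall>i\<ge>n. v i = 0}"

definition hweight :: "nat \<Rightarrow> (nat \<Rightarrow> 'a::zero) \<Rightarrow> nat" where
  "hweight n c = card {i. i < n \<and> c i \<noteq> 0}"

definition lin_code :: "nat \<Rightarrow> (nat \<Rightarrow> 'a::field) set \<Rightarrow> bool" where
  "lin_code n C \<longleftrightarrow> C \<subseteq> vecs n \<and> (\<lambda>i. 0) \<in> C \<and>
     (\<forall>x\<in>C. \<forall>y\<in>C. (\<lambda>i. x i + y i) \<in> C) \<and>
     (\<forall>a. \<forall>x\<in>C. (\<lambda>i. a * x i) \<in> C)"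

definition lin_comb :: "(nat \<Rightarrow> 'a::field) list \<Rightarrow> (nat \<Rightarrow> 'a) \<Rightarrow> (nat \<Rightarrow> 'a)" where
  "lin_comb bs a = (\<lambda>i. \<Sum>j<length bs. a j * (bs ! j) i)"

definition lin_indep :: "(nat \<Rightarrow> 'a::field) list \<Rightarrow> bool" where
  "lin_indep bs \<longleftrightarrow> (\<forall>a. lin_comb bs a = (\<lambda>i. 0) \<longrightarrow> (\<forall>j<length bs. a j = 0))"

definition has_dim :: "(nat \<Rightarrow> 'a::field) set \<Rightarrow> nat \<Rightarrow> bool" where
  "has_dim C r \<longleftrightarrow> (\<exists>bs. length bs = r \<and> lin_indep bs \<and> C = range (lin_comb bs))"

definition min_dist :: "nat \<Rightarrow> (nat \<Rightarrow> 'a::field) set \<Rightarrow> nat" where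
  "min_dist n C = Min (hweight n ` (C - {\<lambda>i. 0}))"

definition is_nkd_code :: "nat \<Rightarrow> nat \<Rightarrow> nat \<Rightarrow> (nat \<Rightarrow> 'a::field) set \<Rightarrow> bool" where
  "is_nkd_code n k d C \<longleftrightarrow> lin_code n C \<and> has_dim C k \<and> min_dist n C = d"

definition distance_optimal :: "nat \<Rightarrow> nat \<Rightarrow> nat \<Rightarrow> (nat \<Rightarrow> 'a::field) set \<Rightarrow> bool" where
  "distance_optimal n k d C \<longleftrightarrow> is_nkd_code n k d C \<and>
     \<not> (\<exists>(C'::(nat \<Rightarrow> 'a) set) d'. d' \<ge> d + 1 \<and> is_nkd_code n k d' C')"

definition code_support :: "nat \<Rightarrow> (nat \<Rightarrow> 'a::zero) set \<Rightarrow> nat set" where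
  "code_support n D = {i. i < n \<and> (\<exists>c\<in>D. c i \<noteq> 0)}"

definition ghw :: "nat \<Rightarrow> (nat \<Rightarrow> 'a::field) set \<Rightarrow> nat \<Rightarrow> nat" where
  "ghw n C r = Min {card (code_support n D) | D. D \<subseteq> C \<and> lin_code n D \<and> has_dim D r}"

text \<open>i_h: least index of a nonzero q-adic digit of h.\<close>
definition least_digit_index :: "nat \<Rightarrow> nat \<Rightarrow> nat" where
  "least_digit_index q h = (LEAST i. (h div q ^ i) mod q > 0)"

text \<open>U_i = span of e_{(i-1)u+1},...,e_{iu} inside F^k (0-based indices (i-1)u..iu-1).\<close>
definition block_subspace :: "nat \<Rightarrow> nat \<Rightarrow> nat \<Rightarrow> (nat \<Rightarrow> 'a::zero) set" where
  "block_subspace k u i = {v \<in> vecs k. \<forall>j. v j \<noteq> 0 \<longrightarrow> (i - 1) * u \<le> j \<and> j < i * u}"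

definition U_set :: "nat \<Rightarrow> nat \<Rightarrow> nat \<Rightarrow> (nat \<Rightarrow> 'a::zero) set" where
  "U_set k u h = {v \<in> vecs k. v \<noteq> (\<lambda>i. 0) \<and> (\<forall>i\<in>{1..h}. v \<notin> block_subspace k u i)}"

definition proj_reps :: "(nat \<Rightarrow> 'a::field) set \<Rightarrow> (nat \<Rightarrow> 'a) list \<Rightarrow> bool" where
  "proj_reps S cols \<longleftrightarrow> set cols \<subseteq> S \<and>
     (\<forall>v\<in>S. \<exists>!j. j < length cols \<and> (\<exists>l. l \<noteq> 0 \<and> cols ! j = (\<lambda>i. l * v i)))"

definition gen_code :: "nat \<Rightarrow> (nat \<Rightarrow> 'a::field) list \<Rightarrow> (nat \<Rightarrow> 'a) set" where
  "gen_code k cols = (\<lambda>x. (\<lambda>j. if j < length cols then \<Sum>i<k. x i * (cols ! j) i else 0)) ` vecs k"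

end

theory Submission
  imports Defs "HOL-Library.FuncSet" "HOL-Library.Cardinality"
begin


definition vsp :: "nat set \<Rightarrow> (nat \<Rightarrow> 'a::zero) set" where
  "vsp I = {v. \<forall>j. j \<notin> I \<longrightarrow> v j = 0}"

definition subsp :: "(nat \<Rightarrow> 'a::field) set \<Rightarrow> bool" where
  "subsp X \<longleftrightarrow> (\<lambda>i. 0) \<in> X \<and> (\<forall>x\<in>X. \<forall>y\<in>X. (\<lambda>i. x i + y i) \<in> X) \<and> (\<forall>a. \<forall>x\<in>X. (\<lambda>i. a * x i) \<in> X)"

definition ip :: "nat set \<Rightarrow> (nat \<Rightarrow> 'a::field) \<Rightarrow> (nat \<Rightarrow> 'a) \<Rightarrow> 'a" where
  "ip I x v = (\<Sum>j\<in>I. x j * v j)"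

lemma card_field_ge2: "card (UNIV :: 'a::{finite,field} set) \<ge> 2"
proof -
  have "card {0::'a, 1} = 2" by simp
  moreover have "card {0::'a, 1} \<le> CARD('a)" by (rule card_mono) auto
  ultimately show ?thesis by simp
qed

lemma card_vsp:
  assumes "finite I"
  shows "card (vsp I :: (nat \<Rightarrow> 'a::{finite,zero}) set) = CARD('a) ^ card I"
    and "finite (vsp I :: (nat \<Rightarrow> 'a::{finite,zero}) set)"
proof -
  have bij: "bij_betw (\<lambda>v. restrict v I) (vsp I :: (nat \<Rightarrow> 'a) set) (PiE I (\<lambda>_. UNIV))"
  proof (rule bij_betwI[where g = "\<lambda>f j. if j \<in> I then f j else 0"])
    show "(\<lambda>v. restrict v I) \<in> vsp I \<rightarrow> PiE I (\<lambda>_. UNIV)" by auto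
    show "(\<lambda>f j. if j \<in> I then f j else 0) \<in> PiE I (\<lambda>_. UNIV) \<rightarrow> vsp I" by (auto simp: vsp_def)
    show "\<And>x. x \<in> vsp I \<Longrightarrow> (\<lambda>j. if j \<in> I then restrict x I j else 0) = x"
      by (auto simp: vsp_def fun_eq_iff)
    show "\<And>y. y \<in> PiE I (\<lambda>_. UNIV) \<Longrightarrow> restrict (\<lambda>j. if j \<in> I then y j else 0) I = y"
      by (auto simp: fun_eq_iff PiE_def extensional_def)
  qed
  have "card (PiE I (\<lambda>_. UNIV :: 'a set)) = CARD('a) ^ card I" using assms by (simp add: card_PiE)
  then show "card (vsp I :: (nat \<Rightarrow> 'a::{finite,zero}) set) = CARD('a) ^ card I"
    using bij_betw_same_card[OF bij] by simp
  show "finite (vsp I :: (nat \<Rightarrow> 'a::{finite,zero}) set)" using bij_betw_finite[OF bij] by (simp add: finite_PiE assms)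
qed

lemma subsp_add: "subsp S \<Longrightarrow> x \<in> S \<Longrightarrow> y \<in> S \<Longrightarrow> (\<lambda>i. x i + y i) \<in> S"
  by (auto simp: subsp_def)
lemma subsp_smul: "subsp S \<Longrightarrow> x \<in> S \<Longrightarrow> (\<lambda>i. a * x i) \<in> S"
  by (auto simp: subsp_def)
lemma subsp_zero: "subsp S \<Longrightarrow> (\<lambda>i. 0) \<in> S"
  by (auto simp: subsp_def)

lemma subsp_sub:
  assumes "subsp S" "x \<in> S" "y \<in> S"
  shows "(\<lambda>i. x i - y i) \<in> S"
proof -
  show ?thesis using subsp_add[OF assms(1) assms(2) subsp_smul[OF assms(1) assms(3), of "-1"]] by simp
qed


lemma fiber_card:
  fixes S :: "(nat \<Rightarrow> 'a::field) set" and g :: "(nat \<Rightarrow> 'a) \<Rightarrow> 'b"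
  assumes fin: "finite S" and sub: "subsp S"
    and eqv: "\<And>s t. s \<in> S \<Longrightarrow> t \<in> S \<Longrightarrow> g s = g t \<longleftrightarrow> g (\<lambda>i. s i - t i) = z"
  shows "card S = card (g ` S) * card {s \<in> S. g s = z}"
proof -
  let ?K = "{s \<in> S. g s = z}"
  have S_eq: "S = (\<Union>y\<in>g ` S. {s\<in>S. g s = y})" by auto
  have "card S = (\<Sum>y\<in>g ` S. card {s\<in>S. g s = y})"
    apply (subst S_eq) apply (rule card_UN_disjoint) using fin by auto
  also have "... = (\<Sum>y\<in>g ` S. card ?K)"
  proof (rule sum.cong[OF refl])
    fix y assume "y \<in> g ` S"
    then obtain s0 where s0: "s0 \<in> S" "g s0 = y" by auto
    have "bij_betw (\<lambda>k i. k i + s0 i) ?K {s\<in>S. g s = y}"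
    proof (rule bij_betwI[where g = "\<lambda>s i. s i - s0 i"])
      show "(\<lambda>k i. k i + s0 i) \<in> ?K \<rightarrow> {s\<in>S. g s = y}"
      proof
        fix k assume k: "k \<in> ?K"
        have a: "(\<lambda>i. k i + s0 i) \<in> S" using subsp_add[OF sub] k s0 by auto
        have "(\<lambda>i. (k i + s0 i) - s0 i) = k" by auto
        then have "g (\<lambda>i. k i + s0 i) = g s0" using eqv[OF a s0(1)] k by auto
        then show "(\<lambda>i. k i + s0 i) \<in> {s\<in>S. g s = y}" using a s0 by auto
      qed
      show "(\<lambda>s i. s i - s0 i) \<in> {s\<in>S. g s = y} \<rightarrow> ?K"
        using eqv subsp_sub[OF sub] s0 by auto
      show "\<And>x. x \<in> ?K \<Longrightarrow> (\<lambda>i. (\<lambda>i. x i + s0 i) i - s0 i) = x" by auto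
      show "\<And>x. x \<in> {s\<in>S. g s = y} \<Longrightarrow> (\<lambda>i. (\<lambda>i. x i - s0 i) i + s0 i) = x" by auto
    qed
    then show "card {s\<in>S. g s = y} = card ?K" by (simp add: bij_betw_same_card)
  qed
  also have "... = card (g ` S) * card ?K" by simp
  finally show ?thesis .
qed

lemma hyperplane_card:
  fixes S :: "(nat \<Rightarrow> 'a::{finite,field}) set"
  assumes fin: "finite S" and sub: "subsp S"
    and add: "\<And>s t. s\<in>S \<Longrightarrow> t\<in>S \<Longrightarrow> f (\<lambda>i. s i + t i) = f s + f t"
    and smul: "\<And>a s. s\<in>S \<Longrightarrow> f (\<lambda>i. a * s i) = a * f s"
    and s0: "s0 \<in> S" "f s0 \<noteq> 0"
  shows "card S = CARD('a) * card {s\<in>S. f s = 0}"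
proof -
  have eqv: "f s = f t \<longleftrightarrow> f (\<lambda>i. s i - t i) = 0" if "s \<in> S" "t \<in> S" for s t
  proof -
    have m: "(\<lambda>i. (-1) * t i) \<in> S" using subsp_smul[OF sub that(2)] .
    have e: "(\<lambda>i. s i - t i) = (\<lambda>i. s i + (-1) * t i)" by auto
    have "f (\<lambda>i. s i + (-1) * t i) = f s + (-1) * f t" by (simp only: add[OF that(1) m] smul[OF that(2)])
    then have "f (\<lambda>i. s i - t i) = f s + (-1) * f t" by (simp only: e)
    then show ?thesis by auto
  qed
  have img: "f ` S = UNIV"
  proof (rule set_eqI, rule iffI)
    fix c :: 'a
    have "(\<lambda>i. (c / f s0) * s0 i) \<in> S" using subsp_smul[OF sub s0(1)] .
    moreover have "f (\<lambda>i. (c / f s0) * s0 i) = (c / f s0) * f s0" by (rule smul[OF s0(1)])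
    then have "f (\<lambda>i. (c / f s0) * s0 i) = c" using s0(2) by simp
    ultimately show "c \<in> f ` S" by force
  qed auto
  show ?thesis using fiber_card[OF fin sub, of f 0] eqv img by simp
qed

lemma card_filter_sum: "finite A \<Longrightarrow> card {x\<in>A. P x} = (\<Sum>x\<in>A. if P x then 1 else 0)"
  by (simp add: sum.If_cases Int_def)

lemma ip_add: "ip I x (\<lambda>i. v i + w i) = ip I x v + ip I x w"
  by (simp add: ip_def distrib_left sum.distrib)
lemma ip_smul: "ip I x (\<lambda>i. a * v i) = a * ip I x v"
  by (simp add: ip_def sum_distrib_left algebra_simps)
lemma ip_add1: "ip I (\<lambda>i. v i + w i) x = ip I v x + ip I w x"
  by (simp add: ip_def distrib_right sum.distrib)
lemma ip_smul1: "ip I (\<lambda>i. a * v i) x = a * ip I v x"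
  by (simp add: ip_def sum_distrib_left algebra_simps)

lemma subsp_vsp: "subsp (vsp I)"
  by (auto simp: subsp_def vsp_def)

lemma arith_dual:
  fixes q N X Y :: nat
  assumes "q \<ge> 2" "Y \<le> N" "X \<ge> 1" "q*N + (X-1)*N = q*Y*X + (N-Y)*X"
  shows "X * Y = N"
proof -
  have "int (q*N + (X-1)*N) = int (q*Y*X + (N-Y)*X)" using assms(4) by simp
  then have "int q*int N + (int X-1)*int N = int q*int Y*int X + (int N-int Y)*int X"
    using assms(2,3) by (simp add: of_nat_diff)
  then have "(int q - 1) * (int N - int X * int Y) = 0" by (simp add: algebra_simps)
  then have "int N = int X * int Y" using assms(1) by simp
  then show ?thesis by (metis of_nat_eq_iff of_nat_mult)
qed

lemma duality:
  fixes X :: "(nat \<Rightarrow> 'a::{finite,field}) set"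
  assumes I: "finite I" and XV: "X \<subseteq> vsp I" and sub: "subsp X"
  shows "card X * card {v \<in> vsp I. \<forall>x\<in>X. ip I x v = 0} = CARD('a) ^ card I"
proof -
  let ?q = "CARD('a)" let ?V = "vsp I :: (nat \<Rightarrow> 'a) set"
  let ?N = "?q ^ card I"
  let ?Y = "{v \<in> ?V. \<forall>x\<in>X. ip I x v = 0}"
  have finV: "finite ?V" using card_vsp(2)[OF I] .
  have finX: "finite X" using finite_subset[OF XV finV] .
  have cV: "card ?V = ?N" using card_vsp(1)[OF I] .
  have q2: "?q \<ge> 2" by (rule card_field_ge2)
  have swap: "(\<Sum>x\<in>X. card {v\<in>?V. ip I x v = 0}) = (\<Sum>v\<in>?V. card {x\<in>X. ip I x v = 0})"
    by (simp add: card_filter_sum finX finV sum.swap[of _ X ?V])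
  have zX: "(\<lambda>i. 0) \<in> X" using sub by (simp add: subsp_def)
  have left: "?q * (\<Sum>x\<in>X. card {v\<in>?V. ip I x v = 0}) = ?q * ?N + (card X - 1) * ?N"
  proof -
    have X_eq: "X = insert (\<lambda>i. 0) (X - {\<lambda>i. 0})" using zX by auto
    have "(\<Sum>x\<in>X. card {v\<in>?V. ip I x v = 0}) = card {v\<in>?V. ip I (\<lambda>i. 0) v = 0} + (\<Sum>x\<in>X - {\<lambda>i. 0}. card {v\<in>?V. ip I x v = 0})"
      by (subst X_eq, subst sum.insert) (use finX in auto)
    also have "card {v\<in>?V. ip I (\<lambda>i. 0) v = 0} = ?N" using cV by (simp add: ip_def)
    finally have e1: "(\<Sum>x\<in>X. card {v\<in>?V. ip I x v = 0}) = ?N + (\<Sum>x\<in>X - {\<lambda>i. 0}. card {v\<in>?V. ip I x v = 0})" .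
    have e2: "?q * card {v\<in>?V. ip I x v = 0} = ?N" if x: "x \<in> X - {\<lambda>i. 0}" for x
    proof -
      from x have "x \<noteq> (\<lambda>i. 0)" by auto
      then obtain j where j: "x j \<noteq> 0" by auto
      have jI: "j \<in> I" using j x XV by (auto simp: vsp_def)
      let ?e = "\<lambda>i. if i = j then (1::'a) else 0"
      have eV: "?e \<in> ?V" using jI by (auto simp: vsp_def)
      have "ip I x ?e = x j" using jI I by (simp add: ip_def if_distrib cong: if_cong)
      then have "card ?V = ?q * card {v\<in>?V. ip I x v = 0}"
        by (intro hyperplane_card[OF finV subsp_vsp _ _ eV]) (auto simp: ip_add ip_smul j)
      then show ?thesis using cV by simp
    qed
    have "?q * (\<Sum>x\<in>X - {\<lambda>i. 0}. card {v\<in>?V. ip I x v = 0}) = (\<Sum>x\<in>X - {\<lambda>i. 0}. ?N)"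
      by (simp add: sum_distrib_left e2)
    also have "... = (card X - 1) * ?N" using zX finX by simp
    finally show ?thesis using e1 by (simp add: algebra_simps)
  qed
  have right: "?q * (\<Sum>v\<in>?V. card {x\<in>X. ip I x v = 0}) = ?q * card ?Y * card X + (?N - card ?Y) * card X"
  proof -
    have YV: "?Y \<subseteq> ?V" by auto
    have s: "(\<Sum>v\<in>?V. card {x\<in>X. ip I x v = 0}) = (\<Sum>v\<in>?V - ?Y. card {x\<in>X. ip I x v = 0}) + (\<Sum>v\<in>?Y. card {x\<in>X. ip I x v = 0})"
      using sum.subset_diff[OF YV finV] by simp
    have a: "(\<Sum>v\<in>?Y. card {x\<in>X. ip I x v = 0}) = card ?Y * card X"
    proof -
      have "(\<Sum>v\<in>?Y. card {x\<in>X. ip I x v = 0}) = (\<Sum>v\<in>?Y. card X)"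
        by (rule sum.cong) (auto intro: arg_cong[where f=card])
      then show ?thesis by simp
    qed
    have b: "?q * card {x\<in>X. ip I x v = 0} = card X" if v: "v \<in> ?V - ?Y" for v
    proof -
      from v obtain x0 where x0: "x0 \<in> X" "ip I x0 v \<noteq> 0" by auto
      have "card X = ?q * card {x\<in>X. ip I x v = 0}"
        by (rule hyperplane_card[OF finX sub _ _ x0(1), of "\<lambda>x. ip I x v", OF _ _ x0(2)]) (auto simp: ip_add1 ip_smul1)
      then show ?thesis by simp
    qed
    have "?q * (\<Sum>v\<in>?V - ?Y. card {x\<in>X. ip I x v = 0}) = (\<Sum>v\<in>?V - ?Y. card X)"
      by (simp add: sum_distrib_left b)
    also have "... = (?N - card ?Y) * card X"
      using card_Diff_subset[OF finite_subset[OF YV finV] YV] cV by simp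
    finally show ?thesis using s a by (simp add: algebra_simps)
  qed
  have YleN: "card ?Y \<le> ?N" using card_mono[OF finV, of ?Y] cV by auto
  have X1: "card X \<ge> 1" using zX finX by (metis One_nat_def Suc_leI card_gt_0_iff empty_iff)
  have eq: "?q * ?N + (card X - 1) * ?N = ?q * card ?Y * card X + (?N - card ?Y) * card X"
    using left right swap by simp
  show ?thesis using arith_dual[OF q2 YleN X1 eq] .
qed



definition restr :: "nat set \<Rightarrow> (nat \<Rightarrow> 'a::zero) \<Rightarrow> (nat \<Rightarrow> 'a)" where
  "restr J x = (\<lambda>j. if j \<in> J then x j else 0)"

lemma ceil_div_div:
  fixes d a b :: nat
  assumes "a \<ge> 1" "b \<ge> 1"
  shows "((d + a - 1) div a + b - 1) div b = (d + a*b - 1) div (a*b)"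
proof -
  obtain a' where a: "a = Suc a'" using assms(1) by (cases a) auto
  obtain b' where b: "b = Suc b'" using assms(2) by (cases b) auto
  note ab = a b
  have "(d + a' + a * b') div a = b' + (d + a') div a" by (rule div_mult_self2) (simp add: a)
  moreover have "d + a' + a * b' = d + a*b - 1" using ab by simp
  ultimately have "(d + a - 1) div a + b - 1 = (d + a*b - 1) div a" using ab by (simp add: ac_simps)
  then show ?thesis by (simp add: div_mult2_eq)
qed

lemma ceil_le:
  fixes d q m :: nat
  assumes "q \<ge> 1" "d \<le> q * m"
  shows "(d + q - 1) div q \<le> m"
proof -
  have "(d + q - 1) div q \<le> (q * m + (q - 1)) div q" using assms by (intro div_le_mono) simp
  also have "... = m"
  proof -
    obtain q' where q: "q = Suc q'" using assms(1) by (cases q) auto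
    have "(q' + q * m) div q = m + q' div q" by (rule div_mult_self2) (simp add: q)
    then show ?thesis using q by (simp add: add.commute)
  qed
  finally show ?thesis .
qed

lemma card_lambda:
  fixes x c :: "'a::{finite,field}"
  shows "card {l::'a. x - l * c \<noteq> 0} = (if c \<noteq> 0 then CARD('a) - 1 else if x \<noteq> 0 then CARD('a) else 0)"
proof (cases "c \<noteq> 0")
  case True
  have "{l::'a. x - l * c \<noteq> 0} = UNIV - {x / c}"
    using True by (auto simp: field_simps)
  then show ?thesis using True by (simp add: card_Diff_singleton)
next
  case False
  then show ?thesis by (cases "x = 0") auto
qed

lemma lambda_sum:
  fixes x c :: "nat \<Rightarrow> 'a::{finite,field}"
  assumes J: "finite J"
  shows "(\<Sum>l\<in>UNIV. card {j\<in>J. x j - l * c j \<noteq> 0})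
     = (CARD('a) - 1) * card {j\<in>J. c j \<noteq> 0} + CARD('a) * card {j\<in>J - {j\<in>J. c j \<noteq> 0}. x j \<noteq> 0}"
proof -
  let ?q = "CARD('a)" let ?S = "{j\<in>J. c j \<noteq> 0}"
  have cu: "\<And>P. (\<Sum>l\<in>(UNIV::'a set). if P l then 1 else 0) = card {l. P l}"
    using card_filter_sum[of "UNIV::'a set"] by simp
  have "(\<Sum>l\<in>UNIV. card {j\<in>J. x j - l * c j \<noteq> 0}) = (\<Sum>l\<in>UNIV. \<Sum>j\<in>J. if x j - l * c j \<noteq> 0 then 1 else 0)"
    using J by (simp only: card_filter_sum)
  also have "... = (\<Sum>j\<in>J. \<Sum>l\<in>UNIV. if x j - l * c j \<noteq> 0 then 1 else 0)"
    by (rule sum.swap)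
  also have "... = (\<Sum>j\<in>J. card {l::'a. x j - l * c j \<noteq> 0})"
    by (simp only: cu)
  finally have "(\<Sum>l\<in>UNIV. card {j\<in>J. x j - l * c j \<noteq> 0}) = (\<Sum>j\<in>J. card {l::'a. x j - l * c j \<noteq> 0})" .
  also have "... = (\<Sum>j\<in>J. if j \<in> ?S then ?q - 1 else if x j \<noteq> 0 then ?q else 0)"
  proof (rule sum.cong[OF refl])
    fix j assume "j \<in> J"
    then show "card {l::'a. x j - l * c j \<noteq> 0} = (if j \<in> ?S then ?q - 1 else if x j \<noteq> 0 then ?q else 0)"
      unfolding card_lambda by auto
  qed
  also have "... = (\<Sum>j\<in>?S. ?q - 1) + (\<Sum>j\<in>J - ?S. if x j \<noteq> 0 then ?q else 0)"
  proof -
    have "?S \<subseteq> J" by auto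
    then have "(\<Sum>j\<in>J. if j \<in> ?S then ?q - 1 else if x j \<noteq> 0 then ?q else 0)
      = (\<Sum>j\<in>J - ?S. if j \<in> ?S then ?q - 1 else if x j \<noteq> 0 then ?q else 0) + (\<Sum>j\<in>?S. if j \<in> ?S then ?q - 1 else if x j \<noteq> 0 then ?q else 0)"
      using sum.subset_diff J by blast
    also have "(\<Sum>j\<in>J - ?S. if j \<in> ?S then ?q - 1 else if x j \<noteq> 0 then ?q else 0) = (\<Sum>j\<in>J - ?S. if x j \<noteq> 0 then ?q else 0)"
      by (rule sum.cong) auto
    also have "(\<Sum>j\<in>?S. if j \<in> ?S then ?q - 1 else if x j \<noteq> 0 then ?q else 0) = (\<Sum>j\<in>?S. ?q - 1)"
      by (rule sum.cong) auto
    finally show ?thesis by simp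
  qed
  also have "(\<Sum>j\<in>J - ?S. if x j \<noteq> 0 then ?q else 0) = ?q * card {j\<in>J - ?S. x j \<noteq> 0}"
  proof -
    have "card {j\<in>J - ?S. x j \<noteq> 0} = (\<Sum>j\<in>J - ?S. if x j \<noteq> 0 then 1 else 0)"
      using J by (intro card_filter_sum) auto
    then show ?thesis by (simp only: sum_distrib_left mult_1_right mult_0_right if_distrib)
  qed
  finally show ?thesis by simp
qed

lemma griesmer:
  fixes C :: "(nat \<Rightarrow> 'a::{finite,field}) set"
  assumes "finite J" "C \<subseteq> vsp J" "subsp C" "card C = CARD('a)^k" "k \<ge> 1" "d \<ge> 1"
    "\<forall>c\<in>C. c \<noteq> (\<lambda>i. 0) \<longrightarrow> d \<le> card {j\<in>J. c j \<noteq> 0}"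
  shows "(\<Sum>i<k. (d + CARD('a)^i - 1) div CARD('a)^i) \<le> card J"
  using assms
proof (induction k arbitrary: J C d)
  case 0
  then show ?case by simp
next
  case (Suc k)
  let ?q = "CARD('a)"
  have q2: "?q \<ge> 2" by (rule card_field_ge2)
  have finC: "finite C" using Suc.prems(4) q2 card.infinite by fastforce
  have zC: "(\<lambda>i. 0) \<in> C" using Suc.prems(3) by (simp add: subsp_def)
  have "?q \<le> ?q ^ Suc k" using q2 by simp
  then have cC2: "card C \<ge> 2" using Suc.prems(4) q2 by (metis le_trans)
  have "C - {\<lambda>i. 0} \<noteq> {}"
  proof
    assume "C - {\<lambda>i. 0} = {}"
    then have "C = {\<lambda>i. 0}" using zC by auto
    then show False using cC2 by simp
  qed
  then obtain c0 where c0: "c0 \<in> C" "c0 \<noteq> (\<lambda>i. 0)" by auto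
  show ?case
  proof (cases "k = 0")
    case True
    have "d \<le> card {j\<in>J. c0 j \<noteq> 0}" using Suc.prems(7) c0 by auto
    also have "... \<le> card J" using Suc.prems(1) by (intro card_mono) auto
    finally show ?thesis using True by simp
  next
    case False
    define P where "P c \<longleftrightarrow> c \<in> C \<and> c \<noteq> (\<lambda>i. 0)" for c :: "nat \<Rightarrow> 'a"
    define wt where "wt c = card {j\<in>J. c j \<noteq> 0}" for c :: "nat \<Rightarrow> 'a"
    define c where "c = arg_min wt P"
    have "P c \<and> (\<forall>y. P y \<longrightarrow> wt c \<le> wt y)"
      unfolding c_def by (rule arg_min_nat_lemma) (use c0 P_def in auto)
    then have cP: "c \<in> C" "c \<noteq> (\<lambda>i. 0)" and cmin: "\<And>y. y \<in> C \<Longrightarrow> y \<noteq> (\<lambda>i. 0) \<Longrightarrow> wt c \<le> wt y"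
      by (auto simp: P_def)
    define S where "S = {j\<in>J. c j \<noteq> 0}"
    define J' where "J' = J - S"
    have SJ: "S \<subseteq> J" by (auto simp: S_def)
    have finJ': "finite J'" using Suc.prems(1) by (simp add: J'_def)
    have wcS: "wt c = card S" by (simp add: wt_def S_def)
    have dS: "d \<le> card S" using Suc.prems(7) cP by (auto simp: S_def)
    have LS: "(\<Sum>l\<in>UNIV. wt (\<lambda>i. x i - l * c i)) = (?q - 1) * card S + ?q * card {j\<in>J'. x j \<noteq> 0}" for x
      using lambda_sum[OF Suc.prems(1), of x c] unfolding wt_def S_def J'_def by simp
    have combC: "(\<lambda>i. x i - l * c i) \<in> C" if "x \<in> C" for x l
      using subsp_sub[OF Suc.prems(3) that subsp_smul[OF Suc.prems(3) cP(1)]] .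
    have sum_ge: "?q * card S \<le> (\<Sum>l\<in>UNIV. wt (\<lambda>i. x i - l * c i))"
      if x: "x \<in> C" and nz: "\<forall>l. (\<lambda>i. x i - l * c i) \<noteq> (\<lambda>i. 0)" for x
    proof -
      have "(\<Sum>l\<in>(UNIV::'a set). card S) \<le> (\<Sum>l\<in>UNIV. wt (\<lambda>i. x i - l * c i))"
        by (rule sum_mono) (use cmin combC[OF x] nz wcS in metis)
      then show ?thesis by simp
    qed
    have cJ'0: "c j = 0" if "j \<in> J'" for j using that by (auto simp: J'_def S_def)
    have restr_lc: "restr J' (\<lambda>i. l * c i) = (\<lambda>i. 0)" for l
      by (auto simp: restr_def fun_eq_iff cJ'0)
    define K where "K = {x\<in>C. restr J' x = (\<lambda>i. 0)}"
    have K_eq: "K = (\<lambda>l. \<lambda>i. l * c i) ` UNIV"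
    proof
      show "(\<lambda>l. \<lambda>i. l * c i) ` UNIV \<subseteq> K"
        using restr_lc subsp_smul[OF Suc.prems(3) cP(1)] by (auto simp: K_def)
      show "K \<subseteq> (\<lambda>l. \<lambda>i. l * c i) ` UNIV"
      proof
        fix x assume xK: "x \<in> K"
        show "x \<in> (\<lambda>l. \<lambda>i. l * c i) ` UNIV"
        proof (rule ccontr)
          assume nx: "x \<notin> (\<lambda>l. \<lambda>i. l * c i) ` UNIV"
          have nz: "\<forall>l. (\<lambda>i. x i - l * c i) \<noteq> (\<lambda>i. 0)"
          proof
            fix l show "(\<lambda>i. x i - l * c i) \<noteq> (\<lambda>i. 0)"
            proof
              assume "(\<lambda>i. x i - l * c i) = (\<lambda>i. 0)"
              then have "x = (\<lambda>i. l * c i)" by (auto simp: fun_eq_iff)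
              then show False using nx by auto
            qed
          qed
          have "{j\<in>J'. x j \<noteq> 0} = {}" using xK by (auto simp: K_def restr_def fun_eq_iff) (metis)
          then have e0: "card {j\<in>J'. x j \<noteq> 0} = 0" by (simp only: card.empty)
          have "?q * card S \<le> (\<Sum>l\<in>UNIV. wt (\<lambda>i. x i - l * c i))"
            using sum_ge[of x] nz xK by (simp add: K_def)
          also have "... = (?q - 1) * card S" using LS[of x] e0 by simp
          finally have le: "?q * card S \<le> (?q - 1) * card S" .
          have Sp: "card S > 0" using dS Suc.prems(6) by simp
          have "?q - 1 < ?q" using q2 by simp
          then have "(?q - 1) * card S < ?q * card S" using Sp by (rule mult_strict_right_mono)
          then show False using le by linarith
        qed
      qed
    qed
    have cK: "card K = ?q"
    proof -
      obtain j0 where j0: "c j0 \<noteq> 0" using cP(2) by auto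
      have "inj (\<lambda>l. \<lambda>i. l * c i)"
      proof (rule injI)
        fix l l' assume "(\<lambda>i. l * c i) = (\<lambda>i. l' * c i)"
        then have "l * c j0 = l' * c j0" by metis
        then show "l = l'" using j0 by simp
      qed
      then show ?thesis unfolding K_eq by (simp add: card_image)
    qed
    have fib: "card C = card (restr J' ` C) * card K"
      unfolding K_def by (rule fiber_card[OF finC Suc.prems(3)]) (auto simp: restr_def fun_eq_iff)
    have cC': "card (restr J' ` C) = ?q ^ k"
      using fib cK Suc.prems(4) q2 by (simp add: mult.commute)
    have C'sub: "restr J' ` C \<subseteq> vsp J'" by (auto simp: restr_def vsp_def)
    have subC': "subsp (restr J' ` C)"
      unfolding subsp_def
    proof (intro conjI ballI allI)
      show "(\<lambda>i. 0) \<in> restr J' ` C"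
        using zC by (intro image_eqI[of _ _ "\<lambda>i. 0"]) (auto simp: restr_def)
    next
      fix y z assume "y \<in> restr J' ` C" "z \<in> restr J' ` C"
      then obtain a b where "a \<in> C" "b \<in> C" "y = restr J' a" "z = restr J' b" by auto
      then show "(\<lambda>i. y i + z i) \<in> restr J' ` C"
        using subsp_add[OF Suc.prems(3)] by (intro image_eqI[of _ _ "\<lambda>i. a i + b i"]) (auto simp: restr_def)
    next
      fix l y assume "y \<in> restr J' ` C"
      then obtain a where "a \<in> C" "y = restr J' a" by auto
      then show "(\<lambda>i. l * y i) \<in> restr J' ` C"
        using subsp_smul[OF Suc.prems(3)] by (intro image_eqI[of _ _ "\<lambda>i. l * a i"]) (auto simp: restr_def)
    qed
    define d' where "d' = (d + ?q - 1) div ?q"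
    have d'1: "d' \<ge> 1"
    proof -
      have "?q div ?q \<le> (d + ?q - 1) div ?q" using Suc.prems(6) by (intro div_le_mono) simp
      then show ?thesis using q2 by (simp add: d'_def)
    qed
    have minC': "\<forall>y\<in>restr J' ` C. y \<noteq> (\<lambda>i. 0) \<longrightarrow> d' \<le> card {j\<in>J'. y j \<noteq> 0}"
    proof (intro ballI impI)
      fix y assume "y \<in> restr J' ` C" and ynz: "y \<noteq> (\<lambda>i. 0)"
      then obtain x where x: "x \<in> C" "y = restr J' x" by auto
      have nz: "\<forall>l. (\<lambda>i. x i - l * c i) \<noteq> (\<lambda>i. 0)"
      proof
        fix l show "(\<lambda>i. x i - l * c i) \<noteq> (\<lambda>i. 0)"
        proof
          assume "(\<lambda>i. x i - l * c i) = (\<lambda>i. 0)"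
          then have "x = (\<lambda>i. l * c i)" by (auto simp: fun_eq_iff)
          then show False using ynz x(2) restr_lc by simp
        qed
      qed
      have e: "card {j\<in>J'. y j \<noteq> 0} = card {j\<in>J'. x j \<noteq> 0}"
        using x(2) by (auto simp: restr_def intro!: arg_cong[where f=card])
      have "?q * card S \<le> (?q - 1) * card S + ?q * card {j\<in>J'. y j \<noteq> 0}"
        using sum_ge[OF x(1) nz] LS[of x] e by simp
      moreover have "?q * card S = (?q - 1) * card S + card S"
      proof -
        have qs: "?q = Suc (?q - 1)" using q2 by simp
        show ?thesis by (subst (1) qs) (simp only: mult_Suc add.commute)
      qed
      ultimately have "card S \<le> ?q * card {j\<in>J'. y j \<noteq> 0}" by linarith
      then show "d' \<le> card {j\<in>J'. y j \<noteq> 0}"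
        unfolding d'_def using dS q2 by (intro ceil_le) auto
    qed
    have k1: "k \<ge> 1" using False by simp
    have IH: "(\<Sum>i<k. (d' + ?q^i - 1) div ?q^i) \<le> card J'"
      by (rule Suc.IH[OF finJ' C'sub subC' cC' k1 d'1 minC'])
    have "(\<Sum>i<Suc k. (d + ?q^i - 1) div ?q^i) = d + (\<Sum>i<k. (d + ?q^Suc i - 1) div ?q^Suc i)"
      by (simp only: sum.lessThan_Suc_shift) simp
    also have "(\<Sum>i<k. (d + ?q^Suc i - 1) div ?q^Suc i) = (\<Sum>i<k. (d' + ?q^i - 1) div ?q^i)"
    proof (rule sum.cong[OF refl])
      fix i
      have "?q ^ i \<ge> 1" using q2 by simp
      then show "(d + ?q^Suc i - 1) div ?q^Suc i = (d' + ?q^i - 1) div ?q^i"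
        unfolding d'_def using ceil_div_div[of ?q "?q^i" d] q2 by simp
    qed
    also have "d + ... \<le> card S + card J'" using dS IH by simp
    also have "card S + card J' = card J"
      using SJ Suc.prems(1) by (simp add: J'_def card_Diff_subset finite_subset le_add_diff_inverse card_mono)
    finally show ?thesis .
  qed
qed



definition delta :: "nat \<Rightarrow> nat \<Rightarrow> 'a::{zero,one}" where
  "delta t = (\<lambda>i. if i = t then 1 else 0)"

definition linmap :: "((nat \<Rightarrow> 'a::field) \<Rightarrow> (nat \<Rightarrow> 'a)) \<Rightarrow> bool" where
  "linmap L \<longleftrightarrow> (\<forall>x y. L (\<lambda>i. x i + y i) = (\<lambda>i. L x i + L y i)) \<and> (\<forall>c x. L (\<lambda>i. c * x i) = (\<lambda>i. c * L x i))"

lemma linmap_zero: "linmap L \<Longrightarrow> L (\<lambda>i. 0) = (\<lambda>i. 0)"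
proof -
  assume "linmap L"
  then have h: "\<forall>c x. L (\<lambda>i. c * x i) = (\<lambda>i. c * L x i)" by (simp add: linmap_def)
  show ?thesis using h[rule_format, of 0 "\<lambda>i. 0"] by simp
qed

lemma lin_expand_aux:
  assumes "linmap L"
  shows "L (\<lambda>i. \<Sum>t<r. a t * delta t i) = (\<lambda>i. \<Sum>t<r. a t * L (delta t) i)"
proof -
  have hadd: "\<And>x y. L (\<lambda>i. x i + y i) = (\<lambda>i. L x i + L y i)" using assms by (simp add: linmap_def)
  have hsmul: "\<And>c x. L (\<lambda>i. c * x i) = (\<lambda>i. c * L x i)" using assms by (simp add: linmap_def)
  show ?thesis
proof (induction r)
  case 0
  then show ?case using linmap_zero[OF assms] by simp
next
  case (Suc r)
  have "L (\<lambda>i. \<Sum>t<Suc r. a t * delta t i) = L (\<lambda>i. (\<Sum>t<r. a t * delta t i) + a r * delta r i)"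
    by simp
  also have "... = (\<lambda>i. L (\<lambda>i. \<Sum>t<r. a t * delta t i) i + L (\<lambda>i. a r * delta r i) i)"
    by (rule hadd)
  also have "L (\<lambda>i. a r * delta r i) = (\<lambda>i. a r * L (delta r) i)"
    by (rule hsmul)
  finally show ?case using Suc by simp
qed
qed

lemma lin_expand:
  assumes "linmap L" "a \<in> vsp {..<r}"
  shows "L a = (\<lambda>i. \<Sum>t<r. a t * L (delta t) i)"
proof -
  have "a = (\<lambda>i. \<Sum>t<r. a t * delta t i)"
  proof
    fix i
    show "a i = (\<Sum>t<r. a t * delta t i)"
    proof (cases "i < r")
      case True
      then show ?thesis by (simp add: delta_def if_distrib cong: if_cong)
    next
      case False
      then have "a i = 0" using assms(2) by (simp add: vsp_def)
      moreover have "(\<Sum>t<r. a t * delta t i) = 0" using False by (intro sum.neutral) (auto simp: delta_def)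
      ultimately show ?thesis by simp
    qed
  qed
  then have "L a = L (\<lambda>i. \<Sum>t<r. a t * delta t i)" by simp
  also have "... = (\<lambda>i. \<Sum>t<r. a t * L (delta t) i)" by (rule lin_expand_aux[OF assms(1)])
  finally show ?thesis .
qed

lemma restr_in_vsp: "restr I a \<in> vsp I"
  by (simp add: restr_def vsp_def)

lemma restr_id: "a \<in> vsp I \<Longrightarrow> restr I a = a"
  by (auto simp: restr_def vsp_def fun_eq_iff)

lemma hasdim_image:
  fixes L :: "(nat \<Rightarrow> 'a::field) \<Rightarrow> (nat \<Rightarrow> 'a)"
  assumes lin: "linmap L" and inj: "inj_on L (vsp {..<r})"
  shows "has_dim (L ` vsp {..<r}) r"
proof -
  define bs where "bs = map (\<lambda>t. L (delta t)) [0..<r]"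
  have lb: "length bs = r" by (simp add: bs_def)
  have lc: "lin_comb bs a = L (restr {..<r} a)" for a
  proof -
    have "L (restr {..<r} a) = (\<lambda>i. \<Sum>t<r. restr {..<r} a t * L (delta t) i)"
      by (rule lin_expand[OF lin restr_in_vsp])
    also have "... = (\<lambda>i. \<Sum>t<r. a t * (bs ! t) i)"
      by (auto simp: restr_def bs_def intro!: sum.cong)
    finally show ?thesis by (simp add: lin_comb_def lb)
  qed
  have rng: "range (lin_comb bs) = L ` vsp {..<r}"
  proof
    show "range (lin_comb bs) \<subseteq> L ` vsp {..<r}" using lc restr_in_vsp by auto
    show "L ` vsp {..<r} \<subseteq> range (lin_comb bs)"
    proof
      fix y assume "y \<in> L ` vsp {..<r}"
      then obtain a where a: "a \<in> vsp {..<r}" "y = L a" by auto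
      then have "y = lin_comb bs a" using lc restr_id by metis
      then show "y \<in> range (lin_comb bs)" by auto
    qed
  qed
  have li: "lin_indep bs"
    unfolding lin_indep_def
  proof (intro allI impI)
    fix a j assume z: "lin_comb bs a = (\<lambda>i. 0)" and j: "j < length bs"
    have "L (restr {..<r} a) = L (\<lambda>i. 0)" using z lc linmap_zero[OF lin] by simp
    moreover have "(\<lambda>i. 0) \<in> vsp {..<r}" by (simp add: vsp_def)
    ultimately have "restr {..<r} a = (\<lambda>i. 0)" using inj restr_in_vsp by (metis inj_onD)
    then show "a j = 0" using j lb by (metis restr_def lessThan_iff)
  qed
  show ?thesis unfolding has_dim_def using lb li rng by blast
qed

lemma lin_comb_diff: "lin_comb bs (\<lambda>j. a j - b j) = (\<lambda>i. lin_comb bs a i - lin_comb bs b i)"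
  by (simp add: lin_comb_def left_diff_distrib sum_subtractf)

lemma hasdim_card:
  fixes C :: "(nat \<Rightarrow> 'a::{finite,field}) set"
  assumes "has_dim C r"
  shows "card C = CARD('a) ^ r" "finite C"
proof -
  obtain bs where bs: "length bs = r" "lin_indep bs" "C = range (lin_comb bs)"
    using assms by (auto simp: has_dim_def)
  have lcr: "lin_comb bs a = lin_comb bs (restr {..<r} a)" for a
    by (auto simp: lin_comb_def restr_def bs(1) intro!: sum.cong)
  have C_eq: "C = lin_comb bs ` vsp {..<r}"
    using bs(3) lcr restr_in_vsp by blast
  have inj: "inj_on (lin_comb bs) (vsp {..<r})"
  proof (rule inj_onI)
    fix a b assume a: "a \<in> vsp {..<r}" and b: "b \<in> vsp {..<r}" and e: "lin_comb bs a = lin_comb bs b"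
    have "lin_comb bs (\<lambda>j. a j - b j) = (\<lambda>i. 0)" using e lin_comb_diff[of bs a b] by simp
    then have "\<forall>j<r. a j - b j = 0" using bs(1,2) by (auto simp: lin_indep_def)
    then show "a = b" using a b by (auto simp: vsp_def fun_eq_iff) (metis not_less)
  qed
  show "card C = CARD('a) ^ r" using C_eq card_image[OF inj] card_vsp[of "{..<r}"] by simp
  show "finite C" using C_eq card_vsp(2)[of "{..<r}"] finite_imageI by auto
qed

lemma card_split:
  fixes P Q :: "(nat \<Rightarrow> 'a::{finite,field}) \<Rightarrow> bool"
  assumes "finite A" "finite B" "A \<inter> B = {}"
  shows "card {x\<in>vsp (A \<union> B). P (restr A x) \<and> Q (restr B x)} = card {y\<in>vsp A. P y} * card {z\<in>vsp B. Q z}"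
proof -
  have bij: "bij_betw (\<lambda>x. (restr A x, restr B x)) {x\<in>vsp (A \<union> B). P (restr A x) \<and> Q (restr B x)}
     ({y\<in>vsp A. P y} \<times> {z\<in>vsp B. Q z})"
  proof (rule bij_betwI[where g = "\<lambda>(y,z). (\<lambda>i. y i + z i)"])
    show "(\<lambda>x. (restr A x, restr B x)) \<in> {x\<in>vsp (A \<union> B). P (restr A x) \<and> Q (restr B x)} \<rightarrow> {y\<in>vsp A. P y} \<times> {z\<in>vsp B. Q z}"
      using restr_in_vsp by auto
    have rA: "restr A (\<lambda>i. y i + z i) = y" if "y \<in> vsp A" "z \<in> vsp B" for y z :: "nat \<Rightarrow> 'a"
    proof
      fix i show "restr A (\<lambda>i. y i + z i) i = y i"
      proof (cases "i \<in> A")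
        case True
        then have "i \<notin> B" using assms(3) by auto
        then show ?thesis using that True by (simp add: restr_def vsp_def)
      next
        case False
        then show ?thesis using that by (simp add: restr_def vsp_def)
      qed
    qed
    have rB: "restr B (\<lambda>i. y i + z i) = z" if "y \<in> vsp A" "z \<in> vsp B" for y z :: "nat \<Rightarrow> 'a"
    proof
      fix i show "restr B (\<lambda>i. y i + z i) i = z i"
      proof (cases "i \<in> B")
        case True
        then have "i \<notin> A" using assms(3) by auto
        then show ?thesis using that True by (simp add: restr_def vsp_def)
      next
        case False
        then show ?thesis using that by (simp add: restr_def vsp_def)
      qed
    qed
    show "(\<lambda>(y,z). (\<lambda>i. y i + z i)) \<in> {y\<in>vsp A. P y} \<times> {z\<in>vsp B. Q z} \<rightarrow> {x\<in>vsp (A \<union> B). P (restr A x) \<and> Q (restr B x)}"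
      using rA rB by (auto simp: vsp_def)
    show "(\<lambda>(y,z). (\<lambda>i. y i + z i)) (restr A x, restr B x) = x" if "x \<in> {x\<in>vsp (A \<union> B). P (restr A x) \<and> Q (restr B x)}" for x
      using that assms(3) by (auto simp: restr_def vsp_def fun_eq_iff)
    show "(restr A ((\<lambda>(y,z). (\<lambda>i. y i + z i)) yz), restr B ((\<lambda>(y,z). (\<lambda>i. y i + z i)) yz)) = yz"
      if "yz \<in> {y\<in>vsp A. P y} \<times> {z\<in>vsp B. Q z}" for yz
      using that rA rB by auto
  qed
  show ?thesis using bij_betw_same_card[OF bij] by (simp add: card_cartesian_product)
qed



definition blk :: "nat \<Rightarrow> nat \<Rightarrow> nat set" where
  "blk u i = {(i - 1) * u ..< i * u}"

definition nb :: "nat \<Rightarrow> nat \<Rightarrow> (nat \<Rightarrow> 'a::zero) \<Rightarrow> nat" where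
  "nb u m x = card {i\<in>{1..m}. restr (blk u i) x \<noteq> (\<lambda>i. 0)}"

lemma restr_restr: "I \<subseteq> J \<Longrightarrow> restr I (restr J x) = restr I x"
  by (auto simp: restr_def fun_eq_iff)

lemma nb_Suc:
  "nb u (Suc m) x = nb u m (restr {..<m*u} x) + (if restr (blk u (Suc m)) x \<noteq> (\<lambda>i. 0) then 1 else 0)"
proof -
  let ?P = "\<lambda>i. restr (blk u i) x \<noteq> (\<lambda>i. 0)"
  have sub: "blk u i \<subseteq> {..<m*u}" if "i \<in> {1..m}" for i
  proof -
    have "i*u \<le> m*u" using that by (simp add: mult_le_mono1)
    then show ?thesis unfolding blk_def by (metis atLeastLessThan_iff lessThan_iff less_le_trans subsetI)
  qed
  have e1: "{i\<in>{1..m}. restr (blk u i) (restr {..<m*u} x) \<noteq> (\<lambda>i. 0)} = {i\<in>{1..m}. ?P i}"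
  proof (rule Collect_cong)
    fix i show "(i\<in>{1..m} \<and> restr (blk u i) (restr {..<m*u} x) \<noteq> (\<lambda>i. 0)) = (i\<in>{1..m} \<and> ?P i)"
      using restr_restr[OF sub[of i], of x] by auto
  qed
  have e2: "{i\<in>{1..Suc m}. ?P i} = {i\<in>{1..m}. ?P i} \<union> (if ?P (Suc m) then {Suc m} else {})"
    by (auto simp: le_Suc_eq)
  have "card ({i\<in>{1..m}. ?P i} \<union> (if ?P (Suc m) then {Suc m} else {}))
      = card {i\<in>{1..m}. ?P i} + (if ?P (Suc m) then 1 else 0)"
    by (cases "?P (Suc m)") auto
  then show ?thesis unfolding nb_def using e1 e2 by simp
qed

lemma card_vsp_nz:
  assumes "finite B"
  shows "card {z\<in>(vsp B :: (nat \<Rightarrow> 'a::{finite,field}) set). z \<noteq> (\<lambda>i. 0)} = CARD('a) ^ card B - 1"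
proof -
  have "{z\<in>vsp B. z \<noteq> (\<lambda>i. 0)} = (vsp B :: (nat \<Rightarrow> 'a) set) - {\<lambda>i. 0}" by auto
  moreover have "(\<lambda>i. 0) \<in> (vsp B :: (nat \<Rightarrow> 'a) set)" by (simp add: vsp_def)
  moreover have "card ((vsp B :: (nat \<Rightarrow> 'a) set) - {\<lambda>i. 0}) = card (vsp B :: (nat \<Rightarrow> 'a) set) - 1"
    using calculation(2) by (rule card_Diff_singleton)
  ultimately show ?thesis using card_vsp(1)[OF assms, where 'a='a] by simp
qed

lemma card_blk: "card (blk u i) = u" if "i \<ge> 1"
  using that by (cases i) (auto simp: blk_def)

lemma count_nb:
  "card {x\<in>(vsp {..<m*u} :: (nat \<Rightarrow> 'a::{finite,field}) set). nb u m x = j} = (m choose j) * (CARD('a)^u - 1)^j"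
proof (induction m arbitrary: j)
  case 0
  have "vsp {} = {(\<lambda>i. 0::'a)}" by (auto simp: vsp_def)
  moreover have "nb u 0 x = 0" for x :: "nat \<Rightarrow> 'a" by (simp add: nb_def)
  ultimately have "{x\<in>(vsp {..<0*u} :: (nat \<Rightarrow> 'a) set). nb u 0 x = j} = (if j = 0 then {\<lambda>i. 0} else {})"
    by auto
  then show ?case by simp
next
  case (Suc m)
  let ?q = "CARD('a)"
  let ?A = "{..<m*u}" let ?B = "blk u (Suc m)"
  have AB: "?A \<union> ?B = {..<Suc m * u}" by (auto simp: blk_def)
  have dAB: "?A \<inter> ?B = {}" by (auto simp: blk_def)
  have finA: "finite ?A" and finB: "finite ?B" by (auto simp: blk_def)
  have set_eq: "{x\<in>(vsp {..<Suc m*u} :: (nat \<Rightarrow> 'a) set). nb u (Suc m) x = j}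
     = {x\<in>vsp (?A \<union> ?B). (\<lambda>y. nb u m y = j) (restr ?A x) \<and> (\<lambda>z. z = (\<lambda>i. 0)) (restr ?B x)}
     \<union> {x\<in>vsp (?A \<union> ?B). (\<lambda>y. nb u m y + 1 = j) (restr ?A x) \<and> (\<lambda>z. z \<noteq> (\<lambda>i. 0)) (restr ?B x)}"
    unfolding AB by (auto simp: nb_Suc)
  have c1: "card {x\<in>(vsp (?A \<union> ?B) :: (nat \<Rightarrow> 'a) set). (\<lambda>y. nb u m y = j) (restr ?A x) \<and> (\<lambda>z. z = (\<lambda>i. 0)) (restr ?B x)}
     = card {y\<in>(vsp ?A :: (nat \<Rightarrow> 'a) set). nb u m y = j} * card {z\<in>(vsp ?B :: (nat \<Rightarrow> 'a) set). z = (\<lambda>i. 0)}"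
    by (rule card_split[OF finA finB dAB, of "\<lambda>y. nb u m y = j" "\<lambda>z. z = (\<lambda>i. 0)"])
  have c2: "card {x\<in>(vsp (?A \<union> ?B) :: (nat \<Rightarrow> 'a) set). (\<lambda>y. nb u m y + 1 = j) (restr ?A x) \<and> (\<lambda>z. z \<noteq> (\<lambda>i. 0)) (restr ?B x)}
     = card {y\<in>(vsp ?A :: (nat \<Rightarrow> 'a) set). nb u m y + 1 = j} * card {z\<in>(vsp ?B :: (nat \<Rightarrow> 'a) set). z \<noteq> (\<lambda>i. 0)}"
    by (rule card_split[OF finA finB dAB, of "\<lambda>y. nb u m y + 1 = j" "\<lambda>z. z \<noteq> (\<lambda>i. 0)"])
  have z1: "card {z\<in>(vsp ?B :: (nat \<Rightarrow> 'a) set). z = (\<lambda>i. 0)} = 1"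
  proof -
    have "{z\<in>(vsp ?B :: (nat \<Rightarrow> 'a) set). z = (\<lambda>i. 0)} = {\<lambda>i. 0}" by (auto simp: vsp_def)
    then show ?thesis by simp
  qed
  have z2: "card {z\<in>(vsp ?B :: (nat \<Rightarrow> 'a) set). z \<noteq> (\<lambda>i. 0)} = ?q^u - 1"
    using card_vsp_nz[OF finB] card_blk[of "Suc m" u] by simp
  have finV: "finite (vsp (?A \<union> ?B) :: (nat \<Rightarrow> 'a) set)" using card_vsp(2) finA finB by blast
  have "card {x\<in>(vsp {..<Suc m*u} :: (nat \<Rightarrow> 'a) set). nb u (Suc m) x = j}
      = card {y\<in>(vsp ?A :: (nat \<Rightarrow> 'a) set). nb u m y = j} + card {y\<in>(vsp ?A :: (nat \<Rightarrow> 'a) set). nb u m y + 1 = j} * (?q^u - 1)"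
    unfolding set_eq
    by (subst card_Un_disjoint) (use finV c1 c2 z1 z2 in auto)
  also have "... = (Suc m choose j) * (?q^u - 1)^j"
  proof (cases j)
    case 0
    then show ?thesis using Suc.IH[of 0] by simp
  next
    case (Suc j')
    then have "card {y\<in>(vsp ?A :: (nat \<Rightarrow> 'a) set). nb u m y + 1 = j} = (m choose j') * (?q^u - 1)^j'"
      using Suc.IH[of j'] by simp
    moreover have "card {y\<in>(vsp ?A :: (nat \<Rightarrow> 'a) set). nb u m y = j} = (m choose Suc j') * (?q^u - 1)^Suc j'"
      using Suc.IH[of j] Suc by simp
    moreover have "(Suc m choose Suc j') * (?q^u - 1)^Suc j' = (m choose Suc j') * (?q^u - 1)^Suc j' + (m choose j') * (?q^u - 1)^j' * (?q^u - 1)"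
      by (simp only: binomial_Suc_Suc add_mult_distrib power_Suc2 mult.assoc add.commute)
    ultimately show ?thesis using Suc by (simp only:)
  qed
  finally show ?case .
qed

lemma count_nb_global:
  assumes "h * u \<le> k"
  shows "card {x\<in>(vecs k :: (nat \<Rightarrow> 'a::{finite,field}) set). nb u h x = j} = (h choose j) * (CARD('a)^u - 1)^j * CARD('a)^(k - h*u)"
proof -
  let ?A = "{..<h*u}" let ?B = "{h*u..<k}"
  have AB: "?A \<union> ?B = {..<k}" using assms by auto
  have vk: "vecs k = vsp {..<k}" by (auto simp: vecs_def vsp_def)
  have nbr: "nb u h x = nb u h (restr ?A x)" for x :: "nat \<Rightarrow> 'a"
  proof -
    have sub: "blk u i \<subseteq> ?A" if "i \<in> {1..h}" for i
    proof -
      have "i*u \<le> h*u" using that by (simp add: mult_le_mono1)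
      then show ?thesis unfolding blk_def by (metis atLeastLessThan_iff lessThan_iff less_le_trans subsetI)
    qed
    show ?thesis unfolding nb_def
    proof (rule arg_cong[where f=card], rule Collect_cong)
      fix i show "(i\<in>{1..h} \<and> restr (blk u i) x \<noteq> (\<lambda>i. 0)) = (i \<in>{1..h} \<and> restr (blk u i) (restr ?A x) \<noteq> (\<lambda>i. 0))"
        using restr_restr[OF sub[of i], of x] by auto
    qed
  qed
  have seq: "{x\<in>(vecs k :: (nat \<Rightarrow> 'a) set). nb u h x = j} = {x\<in>vsp (?A \<union> ?B). (\<lambda>y. nb u h y = j) (restr ?A x) \<and> (\<lambda>z. True) (restr ?B x)}"
    unfolding AB vk
  proof (rule Collect_cong)
    fix x :: "nat \<Rightarrow> 'a"
    show "(x \<in> vsp {..<k} \<and> nb u h x = j) = (x \<in> vsp {..<k} \<and> nb u h (restr ?A x) = j \<and> True)"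
      using nbr[of x] by simp
  qed
  have "card {x\<in>(vecs k :: (nat \<Rightarrow> 'a) set). nb u h x = j} = card {y\<in>(vsp ?A :: (nat \<Rightarrow> 'a) set). nb u h y = j} * card {z\<in>(vsp ?B :: (nat \<Rightarrow> 'a) set). True}"
    unfolding seq by (rule card_split[of ?A ?B "\<lambda>y. nb u h y = j" "\<lambda>z. True"]) auto
  also have "card {z\<in>(vsp ?B :: (nat \<Rightarrow> 'a) set). True} = CARD('a)^(k - h*u)"
  proof -
    have "{z\<in>(vsp ?B :: (nat \<Rightarrow> 'a) set). True} = vsp ?B" by simp
    then show ?thesis using card_vsp(1)[of ?B, where 'a='a] by simp
  qed
  also have "card {y\<in>(vsp ?A :: (nat \<Rightarrow> 'a) set). nb u h y = j} = (h choose j) * (CARD('a)^u - 1)^j"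
    by (rule count_nb)
  finally show ?thesis by simp
qed



definition enc :: "nat \<Rightarrow> (nat \<Rightarrow> 'a::field) list \<Rightarrow> (nat \<Rightarrow> 'a) \<Rightarrow> (nat \<Rightarrow> 'a)" where
  "enc k cols x = (\<lambda>j. if j < length cols then \<Sum>i<k. x i * (cols ! j) i else 0)"

definition perpk :: "nat \<Rightarrow> (nat \<Rightarrow> 'a::field) set \<Rightarrow> (nat \<Rightarrow> 'a) set" where
  "perpk k X = {v \<in> vsp {..<k}. \<forall>x\<in>X. ip {..<k} x v = 0}"

lemma gen_code_enc: "gen_code k cols = enc k cols ` vecs k"
  by (simp add: gen_code_def enc_def)

lemma vecs_vsp: "vecs k = vsp {..<k}" by (auto simp: vecs_def vsp_def)

lemma subsp_restr_image:
  assumes "subsp X" shows "subsp (restr B ` X)"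
  unfolding subsp_def
proof (intro conjI ballI allI)
  show "(\<lambda>i. 0) \<in> restr B ` X"
    using subsp_zero[OF assms] by (intro image_eqI[of _ _ "\<lambda>i. 0"]) (auto simp: restr_def)
next
  fix y z assume "y \<in> restr B ` X" "z \<in> restr B ` X"
  then obtain a b where "a \<in> X" "b \<in> X" "y = restr B a" "z = restr B b" by auto
  then show "(\<lambda>i. y i + z i) \<in> restr B ` X"
    using subsp_add[OF assms] by (intro image_eqI[of _ _ "\<lambda>i. a i + b i"]) (auto simp: restr_def)
next
  fix l y assume "y \<in> restr B ` X"
  then obtain a where "a \<in> X" "y = restr B a" by auto
  then show "(\<lambda>i. l * y i) \<in> restr B ` X"
    using subsp_smul[OF assms] by (intro image_eqI[of _ _ "\<lambda>i. l * a i"]) (auto simp: restr_def)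
qed

lemma perp_card:
  fixes X :: "(nat \<Rightarrow> 'a::{finite,field}) set"
  assumes "X \<subseteq> vsp {..<k}" "subsp X"
  shows "card X * card (perpk k X) = CARD('a) ^ k"
  using duality[OF _ assms] by (simp add: perpk_def)

locale cset =
  fixes cols :: "(nat \<Rightarrow> 'a::{finite,field}) list" and k u h :: nat
  assumes k0: "k > 0" and u2: "u \<ge> 2" and h0: "h > 0" and khu: "h * u \<le> k"
    and pr: "proj_reps (U_set k u h) cols"
begin

abbreviation "n \<equiv> length cols"
abbreviation "U \<equiv> (U_set k u h :: (nat \<Rightarrow> 'a) set)"
abbreviation "B i \<equiv> (vsp (blk u i) :: (nat \<Rightarrow> 'a) set)"
abbreviation "Z \<equiv> ((\<lambda>i. 0) :: nat \<Rightarrow> 'a)"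

lemma q2: "CARD('a) \<ge> 2" by (rule card_field_ge2)

lemma blk_sub: "i \<in> {1..h} \<Longrightarrow> blk u i \<subseteq> {..<k}"
proof -
  assume "i \<in> {1..h}"
  then have "i*u \<le> h*u" by (simp add: mult_le_mono1)
  then have "i*u \<le> k" using khu by linarith
  then show ?thesis unfolding blk_def by (metis atLeastLessThan_iff lessThan_iff less_le_trans subsetI)
qed

lemma bs_eq: "i \<in> {1..h} \<Longrightarrow> block_subspace k u i = B i"
proof -
  assume i: "i \<in> {1..h}"
  show ?thesis
    using blk_sub[OF i] unfolding block_subspace_def vecs_def vsp_def blk_def
    by (auto simp: subset_iff)
qed

lemma U_eq: "U = vsp {..<k} - {Z} - (\<Union>i\<in>{1..h}. B i)"
  by (auto simp: U_set_def bs_eq vecs_vsp)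

lemma U_sub: "U \<subseteq> vsp {..<k}" using U_eq by auto

lemma finU: "finite U" using U_sub card_vsp(2)[of "{..<k}"] finite_subset by auto

lemma U_scale: "v \<in> U \<Longrightarrow> l \<noteq> 0 \<Longrightarrow> (\<lambda>i. l * v i) \<in> U"
  by (auto simp: U_set_def block_subspace_def vecs_def fun_eq_iff)

lemma cols_in_U: "j < n \<Longrightarrow> cols ! j \<in> U"
  using pr by (auto simp: proj_reps_def)

lemma count_classes:
  assumes inv: "\<And>v l. v \<in> U \<Longrightarrow> l \<noteq> 0 \<Longrightarrow> P (\<lambda>i. l * v i) = P v"
  shows "card {j. j < n \<and> P (cols ! j)} * (CARD('a) - 1) = card {v\<in>U. P v}"
proof -
  let ?A = "{j. j < n \<and> P (cols ! j)}" let ?L = "UNIV - {0::'a}"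
  let ?f = "\<lambda>(j, l). (\<lambda>i. l * (cols ! j) i)"
  have uniq: "\<forall>v\<in>U. \<exists>!j. j < n \<and> (\<exists>l. l \<noteq> 0 \<and> cols ! j = (\<lambda>i. l * v i))"
    using pr by (simp add: proj_reps_def)
  have bij: "bij_betw ?f (?A \<times> ?L) {v\<in>U. P v}"
  proof (rule bij_betw_imageI)
    show "inj_on ?f (?A \<times> ?L)"
    proof (rule inj_onI)
      fix a b assume a: "a \<in> ?A \<times> ?L" and b: "b \<in> ?A \<times> ?L" and eab: "?f a = ?f b"
      obtain j l where ajl: "a = (j, l)" by (cases a)
      obtain j' l' where bjl: "b = (j', l')" by (cases b)
      have j: "j < n" and l: "l \<noteq> 0" and j': "j' < n" and l': "l' \<noteq> 0" using a b ajl bjl by auto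
      have e: "(\<lambda>i. l * (cols ! j) i) = (\<lambda>i. l' * (cols ! j') i)" using eab ajl bjl by simp
      let ?v = "\<lambda>i. l * (cols ! j) i"
      have vU: "?v \<in> U" using U_scale[OF cols_in_U[OF j] l] .
      have c1: "cols ! j = (\<lambda>i. inverse l * ?v i)" using l by (auto simp: fun_eq_iff)
      have pw: "\<And>i. l * (cols ! j) i = l' * (cols ! j') i" using e by metis
      have c2: "cols ! j' = (\<lambda>i. inverse l' * ?v i)" using l' pw by (auto simp: fun_eq_iff)
      have E: "\<exists>!j. j < n \<and> (\<exists>l. l \<noteq> 0 \<and> cols ! j = (\<lambda>i. l * ?v i))" using bspec[OF uniq vU] .
      have il: "inverse l \<noteq> 0" "inverse l' \<noteq> 0" using l l' by auto
      have Pj: "j < n \<and> (\<exists>l. l \<noteq> 0 \<and> cols ! j = (\<lambda>i. l * ?v i))"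
        using j il(1) c1 by blast
      have Pj': "j' < n \<and> (\<exists>l. l \<noteq> 0 \<and> cols ! j' = (\<lambda>i. l * ?v i))"
        using j' il(2) c2 by blast
      have jj: "j = j'" using the1_equality[OF E Pj] the1_equality[OF E Pj'] by simp
      obtain i where i: "(cols ! j) i \<noteq> 0"
        using cols_in_U[OF j] by (auto simp: U_set_def fun_eq_iff)
      have "l * (cols ! j) i = l' * (cols ! j) i" using pw[of i] jj by simp
      then have "l = l'" using i by simp
      then show "a = b" using ajl bjl jj by simp
    qed
    show "?f ` (?A \<times> ?L) = {v\<in>U. P v}"
    proof
      show "?f ` (?A \<times> ?L) \<subseteq> {v\<in>U. P v}"
      proof (rule image_subsetI)
        fix p assume "p \<in> ?A \<times> ?L"
        then obtain j l where jl: "p = (j, l)" "j < n" "P (cols ! j)" "l \<noteq> 0" by auto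
        then show "?f p \<in> {v\<in>U. P v}"
          using U_scale[OF cols_in_U[OF jl(2)] jl(4)] inv[OF cols_in_U[OF jl(2)] jl(4)] by auto
      qed
      show "{v\<in>U. P v} \<subseteq> ?f ` (?A \<times> ?L)"
      proof (rule subsetI)
        fix v assume "v \<in> {v\<in>U. P v}"
        then have v: "v \<in> U" "P v" by auto
        have "\<exists>j. j < n \<and> (\<exists>l. l \<noteq> 0 \<and> cols ! j = (\<lambda>i. l * v i))"
          using uniq v(1) by (meson ex1_implies_ex)
        then obtain j l where jl: "j < n" "l \<noteq> 0" "cols ! j = (\<lambda>i. l * v i)" by blast
        have Pc: "P (cols ! j)" using jl(3) inv[OF v(1) jl(2)] v(2) by simp
        have vv: "v = (\<lambda>i. inverse l * (cols ! j) i)" using jl(2,3) by (auto simp: fun_eq_iff)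
        show "v \<in> ?f ` (?A \<times> ?L)"
          using jl(1,2) Pc vv by (intro image_eqI[of _ _ "(j, inverse l)"]) auto
      qed
    qed
  qed
  have "card (?A \<times> ?L) = card ?A * (CARD('a) - 1)" by (simp add: card_cartesian_product card_Diff_singleton)
  then show ?thesis using bij_betw_same_card[OF bij] by simp
qed

end


definition suppc :: "(nat \<Rightarrow> 'a::field) list \<Rightarrow> nat \<Rightarrow> (nat \<Rightarrow> 'a) set \<Rightarrow> nat set" where
  "suppc cols k X = {j. j < length cols \<and> (\<exists>x\<in>X. ip {..<k} x (cols ! j) \<noteq> 0)}"

context cset begin

lemma blk_disj_lt:
  assumes "a \<ge> 1" "a < b"
  shows "blk u a \<inter> blk u b = {}"
proof -
  have le: "a * u \<le> (b - 1) * u" using assms by (intro mult_le_mono1) simp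
  have "False" if "x \<in> blk u a" "x \<in> blk u b" for x
  proof -
    have "x < a * u" "(b - 1) * u \<le> x" using that by (auto simp: blk_def)
    then show False using le by linarith
  qed
  then show ?thesis by blast
qed

lemma blk_disj: "i \<in> {1..h} \<Longrightarrow> j \<in> {1..h} \<Longrightarrow> i \<noteq> j \<Longrightarrow> blk u i \<inter> blk u j = {}"
  using blk_disj_lt[of i j] blk_disj_lt[of j i] by (cases "i < j") (auto simp: Int_commute)

lemma B_disj:
  assumes "i \<in> {1..h}" "j \<in> {1..h}" "i \<noteq> j" "v \<in> B i" "v \<in> B j"
  shows "v = Z"
proof
  fix t
  have "t \<notin> blk u i \<or> t \<notin> blk u j" using blk_disj[OF assms(1-3)] by auto
  then show "v t = 0" using assms(4,5) by (auto simp: vsp_def)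
qed

lemma B_sub: "i \<in> {1..h} \<Longrightarrow> B i \<subseteq> vsp {..<k}"
  using blk_sub by (auto simp: vsp_def)

lemma card_U_inter:
  assumes W: "W \<subseteq> vsp {..<k}" "finite W" "Z \<in> W"
  shows "card (U \<inter> W) + 1 + (\<Sum>i\<in>{1..h}. card (W \<inter> B i) - 1) = card W"
proof -
  let ?D = "\<lambda>i. W \<inter> B i - {Z}"
  have W_eq: "W = insert Z ((U \<inter> W) \<union> (\<Union>i\<in>{1..h}. ?D i))" using W U_eq by auto
  have dj1: "(U \<inter> W) \<inter> (\<Union>i\<in>{1..h}. ?D i) = {}" using U_eq by auto
  have nz: "Z \<notin> (U \<inter> W) \<union> (\<Union>i\<in>{1..h}. ?D i)" using U_eq by auto
  have finD: "finite (?D i)" for i using W(2) by auto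
  have cU: "card (\<Union>i\<in>{1..h}. ?D i) = (\<Sum>i\<in>{1..h}. card (?D i))"
  proof (rule card_UN_disjoint)
    show "\<forall>i\<in>{1..h}. \<forall>j\<in>{1..h}. i \<noteq> j \<longrightarrow> ?D i \<inter> ?D j = {}"
      using B_disj by blast
  qed (use finD in auto)
  have cD: "card (?D i) = card (W \<inter> B i) - 1" for i
  proof -
    have "Z \<in> W \<inter> B i" using W(3) by (simp add: vsp_def)
    then show ?thesis using W(2) by (simp add: card_Diff_singleton)
  qed
  have finU': "finite (U \<inter> W)" using W(2) by simp
  have "card W = Suc (card ((U \<inter> W) \<union> (\<Union>i\<in>{1..h}. ?D i)))"
    using W(2) nz by (subst W_eq) (simp add: card_insert_if)
  also have "card ((U \<inter> W) \<union> (\<Union>i\<in>{1..h}. ?D i)) = card (U \<inter> W) + card (\<Union>i\<in>{1..h}. ?D i)"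
  proof -
    have finUD: "finite (\<Union>i\<in>{1..h}. ?D i)" using W(2) by (rule finite_subset[rotated]) auto
    show ?thesis by (rule card_Un_disjoint[OF finU' finUD dj1])
  qed
  finally show ?thesis using cU cD by simp
qed

lemma card_B: "i \<in> {1..h} \<Longrightarrow> card (B i) = CARD('a) ^ u"
  using card_vsp(1)[of "blk u i", where 'a='a] card_blk[of i u] by (simp add: blk_def)

lemma card_U: "card U + 1 + h * (CARD('a) ^ u - 1) = CARD('a) ^ k"
proof -
  have "card (U \<inter> vsp {..<k}) + 1 + (\<Sum>i\<in>{1..h}. card (vsp {..<k} \<inter> B i) - 1) = card (vsp {..<k} :: (nat \<Rightarrow> 'a) set)"
  proof (rule card_U_inter)
    show "finite (vsp {..<k} :: (nat \<Rightarrow> 'a) set)" by (rule card_vsp(2)) simp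
  qed (auto simp: vsp_def)
  moreover have "U \<inter> vsp {..<k} = U" using U_sub by auto
  moreover have "(\<Sum>i\<in>{1..h}. card (vsp {..<k} \<inter> B i) - 1) = (\<Sum>i\<in>{1..h}. CARD('a) ^ u - 1)"
  proof (rule sum.cong[OF refl])
    fix i assume i: "i \<in> {1..h}"
    then have "vsp {..<k} \<inter> B i = B i" using B_sub by auto
    then show "card (vsp {..<k} \<inter> B i) - 1 = CARD('a) ^ u - 1" using card_B[OF i] by simp
  qed
  ultimately show ?thesis using card_vsp(1)[of "{..<k}", where 'a='a] by simp
qed

lemma ip_blk:
  assumes i: "i \<in> {1..h}" and v: "v \<in> B i"
  shows "ip {..<k} x v = ip (blk u i) (restr (blk u i) x) v"
proof -
  have "ip {..<k} x v = (\<Sum>j\<in>blk u i. x j * v j)"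
    unfolding ip_def
    by (rule sum.mono_neutral_right) (use blk_sub[OF i] v in \<open>auto simp: vsp_def\<close>)
  also have "... = ip (blk u i) (restr (blk u i) x) v"
    unfolding ip_def by (rule sum.cong) (auto simp: restr_def)
  finally show ?thesis .
qed

lemma perp_blk:
  assumes X: "X \<subseteq> vsp {..<k}" "subsp X" and i: "i \<in> {1..h}"
  shows "card (restr (blk u i) ` X) * card (perpk k X \<inter> B i) = CARD('a) ^ u"
proof -
  have e: "perpk k X \<inter> B i = {v\<in>vsp (blk u i). \<forall>y\<in>restr (blk u i) ` X. ip (blk u i) y v = 0}"
    using ip_blk[OF i] B_sub[OF i] by (auto simp: perpk_def)
  have fb: "finite (blk u i)" by (simp add: blk_def)
  have "card (restr (blk u i) ` X) * card {v\<in>vsp (blk u i). \<forall>y\<in>restr (blk u i) ` X. ip (blk u i) y v = 0} = CARD('a) ^ card (blk u i)"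
    by (rule duality[OF fb]) (use restr_in_vsp subsp_restr_image[OF X(2)] in auto)
  then show ?thesis using e card_blk[of i u] i by simp
qed

lemma supp_formula:
  assumes X: "X \<subseteq> vsp {..<k}"
  shows "card (suppc cols k X) * (CARD('a) - 1) + card (U \<inter> perpk k X) = card U"
proof -
  let ?P = "\<lambda>v. \<exists>x\<in>X. ip {..<k} x v \<noteq> 0"
  have "card {j. j < n \<and> ?P (cols ! j)} * (CARD('a) - 1) = card {v\<in>U. ?P v}"
    by (rule count_classes) (simp add: ip_smul)
  moreover have "{j. j < n \<and> ?P (cols ! j)} = suppc cols k X" by (simp add: suppc_def)
  moreover have "{v\<in>U. ?P v} = U - perpk k X" using U_sub by (auto simp: perpk_def)
  moreover have "card (U - perpk k X) + card (U \<inter> perpk k X) = card U"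
  proof -
    have "card ((U - perpk k X) \<union> (U \<inter> perpk k X)) = card (U - perpk k X) + card (U \<inter> perpk k X)"
      using finU by (intro card_Un_disjoint) auto
    moreover have "(U - perpk k X) \<union> (U \<inter> perpk k X) = U" by auto
    ultimately show ?thesis by simp
  qed
  ultimately show ?thesis by simp
qed

lemma supp_int:
  assumes X: "X \<subseteq> vsp {..<k}"
  shows "int (card (suppc cols k X)) * (int CARD('a) - 1)
     = int CARD('a) ^ k - int (card (perpk k X)) - (\<Sum>i\<in>{1..h}. int CARD('a) ^ u - int (card (perpk k X \<inter> B i)))"
proof -
  let ?P = "perpk k X"
  have Psub: "?P \<subseteq> vsp {..<k}" by (auto simp: perpk_def)
  have finP: "finite ?P" using Psub card_vsp(2)[of "{..<k}"] finite_subset by auto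
  have ZP: "Z \<in> ?P" by (simp add: perpk_def ip_def vsp_def)
  have a: "card (suppc cols k X) * (CARD('a) - 1) + card (U \<inter> ?P) = card U" by (rule supp_formula[OF X])
  have b: "card (U \<inter> ?P) + 1 + (\<Sum>i\<in>{1..h}. card (?P \<inter> B i) - 1) = card ?P"
    by (rule card_U_inter[OF Psub finP ZP])
  have c: "card U + 1 + h * (CARD('a) ^ u - 1) = CARD('a) ^ k" by (rule card_U)
  have d: "card (?P \<inter> B i) \<ge> 1" for i
  proof -
    have "Z \<in> ?P \<inter> B i" using ZP by (simp add: vsp_def)
    then show ?thesis using finP by (metis One_nat_def Suc_leI card_gt_0_iff empty_iff finite_Int)
  qed
  have q2': "CARD('a) \<ge> 1" using q2 by simp
  have qu: "CARD('a) ^ u \<ge> 1" using q2 by simp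
  have S1: "int (\<Sum>i\<in>{1..h}. card (?P \<inter> B i) - 1) = (\<Sum>i\<in>{1..h}. int (card (?P \<inter> B i))) - int h"
    using d by (simp add: of_nat_diff sum_subtractf)
  have S2: "(\<Sum>i\<in>{1..h}. int CARD('a) ^ u - int (card (?P \<inter> B i))) = int h * int CARD('a) ^ u - (\<Sum>i\<in>{1..h}. int (card (?P \<inter> B i)))"
    by (simp add: sum_subtractf)
  have a': "int (card (suppc cols k X)) * (int CARD('a) - 1) + int (card (U \<inter> ?P)) = int (card U)"
    using arg_cong[OF a, of int] q2' by (simp add: of_nat_diff)
  have b': "int (card (U \<inter> ?P)) + 1 + ((\<Sum>i\<in>{1..h}. int (card (?P \<inter> B i))) - int h) = int (card ?P)"
    using arg_cong[OF b, of int] S1 by simp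
  have c': "int (card U) + 1 + int h * (int CARD('a) ^ u - 1) = int CARD('a) ^ k"
    using arg_cong[OF c, of int] qu by (simp add: of_nat_diff)
  show ?thesis using a' b' c' S2 by (simp add: algebra_simps)
qed

end


locale cset2 = cset cols k u h for cols :: "(nat \<Rightarrow> 'a::{finite,field}) list" and k u h +
  assumes gap: "CARD('a) ^ k - CARD('a) ^ (k - 1) > h * (CARD('a) ^ u - 1)"
begin

lemma enc_ip: "enc k cols x j = (if j < n then ip {..<k} x (cols ! j) else 0)"
  by (simp add: enc_def ip_def)

lemma enc_add: "enc k cols (\<lambda>i. x i + y i) = (\<lambda>j. enc k cols x j + enc k cols y j)"
  by (auto simp: enc_def distrib_right sum.distrib fun_eq_iff)

lemma enc_smul: "enc k cols (\<lambda>i. l * x i) = (\<lambda>j. l * enc k cols x j)"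
  by (auto simp: enc_def sum_distrib_left mult.assoc fun_eq_iff)

lemma enc_diff: "enc k cols (\<lambda>i. x i - y i) = (\<lambda>j. enc k cols x j - enc k cols y j)"
  by (auto simp: enc_def left_diff_distrib sum_subtractf fun_eq_iff)

lemma enc_zero: "enc k cols Z = Z"
  by (simp add: enc_def fun_eq_iff)

lemma linmap_enc: "linmap (enc k cols)"
  by (simp add: linmap_def enc_add enc_smul)

abbreviation Ln :: "(nat \<Rightarrow> 'a) \<Rightarrow> (nat \<Rightarrow> 'a) set" where "Ln x \<equiv> range (\<lambda>l. \<lambda>i. l * x i)"

lemma in_Ln: "x \<in> Ln x" by (intro image_eqI[of _ _ 1]) auto

lemma card_line: "y \<noteq> Z \<Longrightarrow> card (Ln y) = CARD('a)"
proof -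
  assume "y \<noteq> Z"
  then obtain j where j: "y j \<noteq> 0" by auto
  have "inj (\<lambda>l. \<lambda>i. l * y i)"
  proof (rule injI)
    fix a b assume "(\<lambda>i. a * y i) = (\<lambda>i. b * y i)"
    then have "a * y j = b * y j" by metis
    then show "a = b" using j by simp
  qed
  then show ?thesis by (simp add: card_image)
qed

lemma line_zero: "Ln Z = {Z}" by auto

lemma Ln_sub: "x \<in> vsp I \<Longrightarrow> Ln x \<subseteq> vsp I" by (auto simp: vsp_def)

lemma subsp_Ln: "subsp (Ln x)"
  unfolding subsp_def
proof (intro conjI ballI allI)
  show "Z \<in> Ln x" by (intro image_eqI[of _ _ 0]) auto
next
  fix a b assume "a \<in> Ln x" "b \<in> Ln x"
  then obtain s t where "a = (\<lambda>i. s * x i)" "b = (\<lambda>i. t * x i)" by auto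
  then show "(\<lambda>i. a i + b i) \<in> Ln x" by (intro image_eqI[of _ _ "s + t"]) (auto simp: distrib_right)
next
  fix c a assume "a \<in> Ln x"
  then obtain s where "a = (\<lambda>i. s * x i)" by auto
  then show "(\<lambda>i. c * a i) \<in> Ln x" by (intro image_eqI[of _ _ "c * s"]) (auto simp: mult.assoc)
qed

lemma restr_Ln: "restr I ` Ln x = Ln (restr I x)"
  by (auto simp: restr_def image_def fun_eq_iff)

lemma hw_enc: "hweight n (enc k cols x) = card (suppc cols k (Ln x))"
proof -
  have "{i. i < n \<and> enc k cols x i \<noteq> 0} = suppc cols k (Ln x)"
  proof (rule set_eqI)
    fix j
    have "(\<exists>y\<in>Ln x. ip {..<k} y (cols ! j) \<noteq> 0) \<longleftrightarrow> ip {..<k} x (cols ! j) \<noteq> 0"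
    proof
      assume "\<exists>y\<in>Ln x. ip {..<k} y (cols ! j) \<noteq> 0"
      then obtain l where "ip {..<k} (\<lambda>i. l * x i) (cols ! j) \<noteq> 0" by auto
      then show "ip {..<k} x (cols ! j) \<noteq> 0" by (simp add: ip_smul1)
    next
      assume "ip {..<k} x (cols ! j) \<noteq> 0"
      then show "\<exists>y\<in>Ln x. ip {..<k} y (cols ! j) \<noteq> 0" using in_Ln by blast
    qed
    then show "j \<in> {i. i < n \<and> enc k cols x i \<noteq> 0} \<longleftrightarrow> j \<in> suppc cols k (Ln x)"
      by (simp add: suppc_def enc_ip)
  qed
  then show ?thesis by (simp add: hweight_def)
qed

lemma qk: "CARD('a) ^ k = CARD('a) * CARD('a) ^ (k - 1)"
  using k0 by (metis Suc_diff_1 power_Suc)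
lemma qu: "CARD('a) ^ u = CARD('a) * CARD('a) ^ (u - 1)"
  using u2 by (metis Suc_diff_1 less_le_trans pos2 power_Suc)

lemma wt_formula:
  assumes x: "x \<in> vsp {..<k}" "x \<noteq> Z"
  shows "int (hweight n (enc k cols x)) = int CARD('a) ^ (k - 1) - int (nb u h x) * int CARD('a) ^ (u - 1)"
proof -
  let ?q = "CARD('a)"
  have LX: "Ln x \<subseteq> vsp {..<k}" using Ln_sub[OF x(1)] .
  have pc: "card (Ln x) * card (perpk k (Ln x)) = ?q ^ k" by (rule perp_card[OF LX subsp_Ln])
  then have P: "card (perpk k (Ln x)) = ?q ^ (k - 1)" using card_line[OF x(2)] qk q2 by simp
  have Pi: "card (perpk k (Ln x) \<inter> B i) = (if restr (blk u i) x \<noteq> Z then ?q ^ (u - 1) else ?q ^ u)"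
    if i: "i \<in> {1..h}" for i
  proof -
    have e: "card (Ln (restr (blk u i) x)) * card (perpk k (Ln x) \<inter> B i) = ?q ^ u"
      using perp_blk[OF LX subsp_Ln i] restr_Ln by simp
    show ?thesis
    proof (cases "restr (blk u i) x \<noteq> Z")
      case True
      then show ?thesis using e card_line[OF True] qu q2 by simp
    next
      case False
      then have "restr (blk u i) x = Z" by simp
      then show ?thesis using e line_zero by simp
    qed
  qed
  have S: "(\<Sum>i\<in>{1..h}. int ?q ^ u - int (card (perpk k (Ln x) \<inter> B i)))
      = int (nb u h x) * (int ?q ^ u - int ?q ^ (u - 1))"
  proof -
    have "(\<Sum>i\<in>{1..h}. int ?q ^ u - int (card (perpk k (Ln x) \<inter> B i)))
        = (\<Sum>i\<in>{1..h}. if restr (blk u i) x \<noteq> Z then int ?q ^ u - int ?q ^ (u - 1) else 0)"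
      by (rule sum.cong[OF refl]) (simp add: Pi)
    also have "... = (\<Sum>i\<in>{i\<in>{1..h}. restr (blk u i) x \<noteq> Z}. int ?q ^ u - int ?q ^ (u - 1))"
      by (rule sum.inter_filter[symmetric]) simp
    also have "... = int (nb u h x) * (int ?q ^ u - int ?q ^ (u - 1))"
      by (simp add: nb_def)
    finally show ?thesis .
  qed
  have main: "int (hweight n (enc k cols x)) * (int ?q - 1)
     = int ?q ^ k - int ?q ^ (k - 1) - int (nb u h x) * (int ?q ^ u - int ?q ^ (u - 1))"
    using supp_int[OF LX] hw_enc P S by simp
  have qki: "int ?q ^ k = int ?q * int ?q ^ (k - 1)" using arg_cong[OF qk, of int] by simp
  have qui: "int ?q ^ u = int ?q * int ?q ^ (u - 1)" using arg_cong[OF qu, of int] by simp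
  have "int (hweight n (enc k cols x)) * (int ?q - 1)
     = (int ?q ^ (k - 1) - int (nb u h x) * int ?q ^ (u - 1)) * (int ?q - 1)"
    using main qki qui by (simp add: algebra_simps)
  moreover have "int ?q - 1 \<noteq> 0" using q2 by simp
  ultimately show ?thesis by simp
qed

lemma nb_le: "nb u h x \<le> h"
proof -
  have "nb u h x \<le> card {1..h}" unfolding nb_def by (rule card_mono) auto
  then show ?thesis by simp
qed

lemma d_pos: "int CARD('a) ^ (k - 1) > int h * int CARD('a) ^ (u - 1)"
proof -
  let ?q = "CARD('a)"
  have qi: "int ?q \<ge> 2" using q2 by simp
  have le: "?q ^ (k - 1) \<le> ?q ^ k" using q2 k0 by (intro power_increasing) auto
  have qu1: "?q ^ u \<ge> 1" using q2 by simp
  have e1: "int (?q ^ k - ?q ^ (k - 1)) = int ?q ^ k - int ?q ^ (k - 1)" using le by (simp add: of_nat_diff)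
  have e2: "int (h * (?q ^ u - 1)) = int h * (int ?q ^ u - 1)" using qu1 by (simp add: of_nat_diff)
  have "int (h * (?q ^ u - 1)) < int (?q ^ k - ?q ^ (k - 1))" using gap by (simp only: of_nat_less_iff)
  then have g: "int ?q ^ k - int ?q ^ (k - 1) > int h * (int ?q ^ u - 1)" unfolding e1[symmetric] e2[symmetric] .
  have qki: "int ?q ^ k = int ?q * int ?q ^ (k - 1)" using arg_cong[OF qk, of int] by simp
  have qui: "int ?q ^ u = int ?q * int ?q ^ (u - 1)" using arg_cong[OF qu, of int] by simp
  have p1: "int ?q ^ (u - 1) \<ge> 1" using qi by simp
  have "int h * (int ?q ^ u - 1) \<ge> int h * (int ?q ^ u - int ?q ^ (u - 1))"
    using p1 by (intro mult_left_mono) auto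
  then have "(int ?q - 1) * int ?q ^ (k - 1) > (int ?q - 1) * (int h * int ?q ^ (u - 1))"
    using g qki qui by (simp add: algebra_simps)
  then show ?thesis using qi by (simp add: mult_less_cancel_left)
qed

lemma wt_ge:
  assumes x: "x \<in> vsp {..<k}" "x \<noteq> Z"
  shows "int (hweight n (enc k cols x)) \<ge> int CARD('a) ^ (k - 1) - int h * int CARD('a) ^ (u - 1)"
proof -
  have "int (nb u h x) * int CARD('a) ^ (u - 1) \<le> int h * int CARD('a) ^ (u - 1)"
    using nb_le by (intro mult_right_mono) auto
  then show ?thesis using wt_formula[OF x] by simp
qed

lemma wt_pos:
  assumes x: "x \<in> vsp {..<k}" "x \<noteq> Z"
  shows "hweight n (enc k cols x) > 0"
  using wt_ge[OF x] d_pos by simp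

lemma hweight_Z: "hweight m Z = 0" by (simp add: hweight_def)

lemma enc_inj: "inj_on (enc k cols) (vsp {..<k})"
proof (rule inj_onI)
  fix x y assume x: "x \<in> vsp {..<k}" and y: "y \<in> vsp {..<k}" and e: "enc k cols x = enc k cols y"
  have d: "(\<lambda>i. x i - y i) \<in> vsp {..<k}" using x y by (auto simp: vsp_def)
  have "enc k cols (\<lambda>i. x i - y i) = Z" using e enc_diff[of x y] by simp
  then have "hweight n (enc k cols (\<lambda>i. x i - y i)) = 0" by (simp add: hweight_Z)
  then have "(\<lambda>i. x i - y i) = Z" using wt_pos[OF d] by (metis less_irrefl)
  then show "x = y" by (auto simp: fun_eq_iff)
qed

end


context cset2 begin

abbreviation "C1 \<equiv> gen_code k cols"

lemma C1_eq: "C1 = enc k cols ` vsp {..<k}"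
  by (simp add: gen_code_enc vecs_vsp)

lemma lin_code_C1: "lin_code n C1"
  unfolding lin_code_def C1_eq
proof (intro conjI ballI allI)
  show "enc k cols ` vsp {..<k} \<subseteq> vecs n" by (auto simp: enc_def vecs_def)
  show "Z \<in> enc k cols ` vsp {..<k}" using enc_zero by (intro image_eqI[of _ _ Z]) (auto simp: vsp_def)
next
  fix a b assume "a \<in> enc k cols ` vsp {..<k}" "b \<in> enc k cols ` vsp {..<k}"
  then obtain x y where "x \<in> vsp {..<k}" "y \<in> vsp {..<k}" "a = enc k cols x" "b = enc k cols y" by auto
  then show "(\<lambda>i. a i + b i) \<in> enc k cols ` vsp {..<k}"
    using enc_add[of x y] by (intro image_eqI[of _ _ "\<lambda>i. x i + y i"]) (auto simp: vsp_def)
next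
  fix l a assume "a \<in> enc k cols ` vsp {..<k}"
  then obtain x where "x \<in> vsp {..<k}" "a = enc k cols x" by auto
  then show "(\<lambda>i. l * a i) \<in> enc k cols ` vsp {..<k}"
    using enc_smul[of l x] by (intro image_eqI[of _ _ "\<lambda>i. l * x i"]) (auto simp: vsp_def)
qed

lemma hasdim_C1: "has_dim C1 k"
  unfolding C1_eq by (rule hasdim_image[OF linmap_enc enc_inj])

lemma finC1: "finite C1"
  unfolding C1_eq by (rule finite_imageI[OF card_vsp(2)]) simp

lemma card_C1_filter: "card {c\<in>C1. R c} = card {x\<in>vsp {..<k}. R (enc k cols x)}"
proof -
  have "{c\<in>C1. R c} = enc k cols ` {x\<in>vsp {..<k}. R (enc k cols x)}" unfolding C1_eq by auto
  moreover have "inj_on (enc k cols) {x\<in>vsp {..<k}. R (enc k cols x)}"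
    using enc_inj by (rule inj_on_subset) auto
  ultimately show ?thesis by (simp add: card_image)
qed

lemma nb_Z: "nb u h Z = 0"
  by (simp add: nb_def restr_def)

lemma wt_zero_iff: "x \<in> vsp {..<k} \<Longrightarrow> hweight n (enc k cols x) = 0 \<longleftrightarrow> x = Z"
  using wt_pos[of x] enc_zero hweight_Z by fastforce

lemma card_w0: "card {c\<in>C1. hweight n c = 0} = 1"
proof -
  have "{x\<in>vsp {..<k}. hweight n (enc k cols x) = 0} = {Z}"
    using wt_zero_iff by (auto simp: vsp_def)
  then show ?thesis by (simp add: card_C1_filter)
qed

lemma qpos: "CARD('a) ^ m > 0" using q2 by simp

lemma wt_eq_iff:
  assumes x: "x \<in> vsp {..<k}" and j: "j \<le> h"
  shows "int (hweight n (enc k cols x)) = int CARD('a) ^ (k - 1) - int j * int CARD('a) ^ (u - 1)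
     \<longleftrightarrow> x \<noteq> Z \<and> nb u h x = j"
proof (cases "x = Z")
  case True
  have "int j * int CARD('a) ^ (u - 1) \<le> int h * int CARD('a) ^ (u - 1)"
    using j by (intro mult_right_mono) auto
  then have "int CARD('a) ^ (k - 1) - int j * int CARD('a) ^ (u - 1) > 0" using d_pos by linarith
  then show ?thesis using True enc_zero hweight_Z by simp
next
  case False
  have "int CARD('a) ^ (k - 1) - int (nb u h x) * int CARD('a) ^ (u - 1) = int CARD('a) ^ (k - 1) - int j * int CARD('a) ^ (u - 1)
     \<longleftrightarrow> nb u h x = j"
    using qpos[of "u - 1"] by simp
  then show ?thesis using wt_formula[OF x False] False by simp
qed

lemma card_wj:
  assumes j: "j \<in> {1..h}"
  shows "card {c\<in>C1. int (hweight n c) = int CARD('a) ^ (k - 1) - int j * int CARD('a) ^ (u - 1)}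
    = (h choose j) * (CARD('a) ^ u - 1) ^ j * CARD('a) ^ (k - h * u)"
proof -
  have "{x\<in>vsp {..<k}. int (hweight n (enc k cols x)) = int CARD('a) ^ (k - 1) - int j * int CARD('a) ^ (u - 1)}
     = {x\<in>vecs k. nb u h x = j}"
    using wt_eq_iff[of _ j] j nb_Z by (auto simp: vecs_vsp)
  then show ?thesis using count_nb_global[OF khu, of j] by (simp add: card_C1_filter)
qed

lemma card_wq: "card {c\<in>C1. hweight n c = CARD('a) ^ (k - 1)} = CARD('a) ^ (k - h * u) - 1"
proof -
  have "{x\<in>vsp {..<k}. hweight n (enc k cols x) = CARD('a) ^ (k - 1)} = {x\<in>vecs k. nb u h x = 0} - {Z}"
  proof -
    have "hweight n (enc k cols x) = CARD('a) ^ (k - 1) \<longleftrightarrow> x \<noteq> Z \<and> nb u h x = 0" if "x \<in> vsp {..<k}" for x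
      using wt_eq_iff[OF that, of 0] by simp
    then show ?thesis by (auto simp: vecs_vsp)
  qed
  moreover have "Z \<in> {x\<in>vecs k. nb u h x = 0}" using nb_Z by (simp add: vecs_def)
  moreover have "finite {x\<in>(vecs k :: (nat \<Rightarrow> 'a) set). nb u h x = 0}"
    using card_vsp(2)[of "{..<k}", where 'a='a] unfolding vecs_vsp by (rule finite_subset[rotated]) auto
  ultimately show ?thesis using count_nb_global[OF khu, of 0, where 'a='a] by (simp add: card_C1_filter card_Diff_singleton)
qed

lemma wt_classes: "\<forall>c\<in>C1. hweight n c = 0 \<or> hweight n c = CARD('a) ^ (k - 1) \<or>
   (\<exists>j\<in>{1..h}. int (hweight n c) = int CARD('a) ^ (k - 1) - int j * int CARD('a) ^ (u - 1))"
proof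
  fix c assume "c \<in> C1"
  then obtain x where x: "x \<in> vsp {..<k}" "c = enc k cols x" unfolding C1_eq by auto
  show "hweight n c = 0 \<or> hweight n c = CARD('a) ^ (k - 1) \<or>
   (\<exists>j\<in>{1..h}. int (hweight n c) = int CARD('a) ^ (k - 1) - int j * int CARD('a) ^ (u - 1))"
  proof (cases "x = Z")
    case True then show ?thesis using x enc_zero hweight_Z by simp
  next
    case False
    note wf = wt_formula[OF x(1) False]
    show ?thesis
    proof (cases "nb u h x = 0")
      case True
      then have "int (hweight n c) = int (CARD('a) ^ (k - 1))" using wf x by simp
      then show ?thesis by simp
    next
      case nz: False
      then have "nb u h x \<in> {1..h}" using nb_le by auto
      then show ?thesis using wf x by blast
    qed
  qed
qed

lemma min_dist_C1: "int (min_dist n C1) = int CARD('a) ^ (k - 1) - int h * int CARD('a) ^ (u - 1)"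
proof -
  have "card {x\<in>(vecs k :: (nat \<Rightarrow> 'a) set). nb u h x = h} = (CARD('a) ^ u - 1) ^ h * CARD('a) ^ (k - h * u)"
    using count_nb_global[OF khu, of h] by simp
  moreover have "CARD('a) ^ u - 1 > 0"
  proof -
    have "CARD('a) ^ u \<ge> CARD('a) ^ 1" using q2 u2 by (intro power_increasing) auto
    then show ?thesis using q2 by simp
  qed
  ultimately have "card {x\<in>(vecs k :: (nat \<Rightarrow> 'a) set). nb u h x = h} > 0" using qpos by simp
  then have "{x\<in>(vecs k :: (nat \<Rightarrow> 'a) set). nb u h x = h} \<noteq> {}" by (metis card.empty less_irrefl)
  then obtain x0 :: "nat \<Rightarrow> 'a" where x0: "x0 \<in> vecs k" "nb u h x0 = h" by blast
  have x0Z: "x0 \<noteq> Z" using x0 nb_Z h0 by auto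
  have x0v: "x0 \<in> vsp {..<k}" using x0 by (simp add: vecs_vsp)
  let ?w = "hweight n (enc k cols x0)"
  have w: "int ?w = int CARD('a) ^ (k - 1) - int h * int CARD('a) ^ (u - 1)"
    using wt_formula[OF x0v x0Z] x0 by simp
  have "Min (hweight n ` (C1 - {Z})) = ?w"
  proof (rule Min_eqI)
    show "finite (hweight n ` (C1 - {Z}))" using finC1 by simp
    show "?w \<in> hweight n ` (C1 - {Z})"
    proof -
      have "enc k cols x0 \<noteq> Z" using wt_zero_iff[OF x0v] x0Z by (metis hweight_Z)
      then show ?thesis unfolding C1_eq using x0v by auto
    qed
    fix y assume "y \<in> hweight n ` (C1 - {Z})"
    then obtain x where x: "x \<in> vsp {..<k}" "enc k cols x \<noteq> Z" "y = hweight n (enc k cols x)"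
      unfolding C1_eq by auto
    have "x \<noteq> Z" using x(2) enc_zero by auto
    then show "?w \<le> y" using wt_ge[OF x(1)] w x(3) by simp
  qed
  then show ?thesis using w by (simp add: min_dist_def)
qed

lemma length_formula: "real n = ((real CARD('a) ^ k - 1) - real h * (real CARD('a) ^ u - 1)) / (real CARD('a) - 1)"
proof -
  have "card {j. j < n \<and> True} * (CARD('a) - 1) = card {v\<in>U. True}"
    by (rule count_classes) simp
  then have a: "n * (CARD('a) - 1) = card U" by simp
  have b: "card U + 1 + h * (CARD('a) ^ u - 1) = CARD('a) ^ k" by (rule card_U)
  have q1: "CARD('a) \<ge> 1" and qu1: "CARD('a) ^ u \<ge> 1" using q2 by auto
  have a': "real n * (real CARD('a) - 1) = real (card U)"
    using arg_cong[OF a, of real] q1 by (simp add: of_nat_diff)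
  have b': "real (card U) + 1 + real h * (real CARD('a) ^ u - 1) = real CARD('a) ^ k"
    using arg_cong[OF b, of real] qu1 by (simp add: of_nat_diff)
  have "real CARD('a) - 1 \<noteq> 0" using q2 by simp
  then show ?thesis using a' b' by (simp add: field_simps)
qed

end


lemma lin_code_image:
  fixes L :: "(nat \<Rightarrow> 'a::field) \<Rightarrow> (nat \<Rightarrow> 'a)"
  assumes lin: "linmap L" and sub: "L ` vsp I \<subseteq> vecs m"
  shows "lin_code m (L ` vsp I)"
  unfolding lin_code_def
proof (intro conjI ballI allI)
  show "L ` vsp I \<subseteq> vecs m" by (rule sub)
  show "(\<lambda>i. 0) \<in> L ` vsp I" using linmap_zero[OF lin] by (intro image_eqI[of _ _ "\<lambda>i. 0"]) (auto simp: vsp_def)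
next
  have hadd: "\<And>x y. L (\<lambda>i. x i + y i) = (\<lambda>i. L x i + L y i)" using lin by (simp add: linmap_def)
  fix a b assume "a \<in> L ` vsp I" "b \<in> L ` vsp I"
  then obtain x y where "x \<in> vsp I" "y \<in> vsp I" "a = L x" "b = L y" by auto
  then show "(\<lambda>i. a i + b i) \<in> L ` vsp I"
    using hadd[of x y] by (intro image_eqI[of _ _ "\<lambda>i. x i + y i"]) (auto simp: vsp_def)
next
  have hsmul: "\<And>c x. L (\<lambda>i. c * x i) = (\<lambda>i. c * L x i)" using lin by (simp add: linmap_def)
  fix l a assume "a \<in> L ` vsp I"
  then obtain x where "x \<in> vsp I" "a = L x" by auto
  then show "(\<lambda>i. l * a i) \<in> L ` vsp I"
    using hsmul[of l x] by (intro image_eqI[of _ _ "\<lambda>i. l * x i"]) (auto simp: vsp_def)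
qed

lemma linmap_comp: "linmap L \<Longrightarrow> linmap M \<Longrightarrow> linmap (L \<circ> M)"
  by (simp add: linmap_def)

context cset2 begin

lemma supp_enc: "code_support n (enc k cols ` X) = suppc cols k X"
  by (auto simp: code_support_def suppc_def enc_ip)

lemma pi_bound:
  fixes X :: "(nat \<Rightarrow> 'a) set"
  assumes X: "X \<subseteq> vsp {..<k}" "subsp X" "card X = CARD('a) ^ r" and i: "i \<in> {1..h}"
  shows "card (perpk k X \<inter> B i) \<ge> CARD('a) ^ (u - min r u)"
proof -
  let ?q = "CARD('a)" let ?m = "min r u"
  have finX: "finite X" using X(1) card_vsp(2)[of "{..<k}"] finite_subset by auto
  have e: "card (restr (blk u i) ` X) * card (perpk k X \<inter> B i) = ?q ^ u" by (rule perp_blk[OF X(1,2) i])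
  have l1: "card (restr (blk u i) ` X) \<le> ?q ^ r" using card_image_le[OF finX] X(3) by simp
  have l2: "card (restr (blk u i) ` X) \<le> ?q ^ u"
  proof -
    have "card (restr (blk u i) ` X) \<le> card (B i)"
      by (rule card_mono) (auto simp: card_vsp(2) blk_def restr_in_vsp)
    then show ?thesis using card_B[OF i] by simp
  qed
  have l: "card (restr (blk u i) ` X) \<le> ?q ^ ?m" using l1 l2 by (cases "r \<le> u") (auto simp: min_def)
  have "?q ^ ?m * ?q ^ (u - ?m) = ?q ^ u" by (simp flip: power_add)
  then have "?q ^ ?m * ?q ^ (u - ?m) \<le> ?q ^ ?m * card (perpk k X \<inter> B i)"
    using e l by (metis mult_le_mono1)
  then show ?thesis using q2 by simp
qed

lemma perp_exact:
  fixes X :: "(nat \<Rightarrow> 'a) set"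
  assumes X: "X \<subseteq> vsp {..<k}" "subsp X" "card X = CARD('a) ^ r" and r: "r \<le> k"
  shows "card (perpk k X) = CARD('a) ^ (k - r)"
proof -
  have "CARD('a) ^ r * card (perpk k X) = CARD('a) ^ r * CARD('a) ^ (k - r)"
    using perp_card[OF X(1,2)] X(3) r by (simp flip: power_add)
  then show ?thesis using q2 by simp
qed

lemma ghw_lower:
  assumes D: "D \<subseteq> C1" "lin_code n D" "has_dim D r" and r: "r \<le> k"
  shows "int (card (code_support n D)) * (int CARD('a) - 1)
    \<ge> int CARD('a) ^ k - int CARD('a) ^ (k - r) - int h * (int CARD('a) ^ u - int CARD('a) ^ (u - min r u))"
proof -
  let ?q = "CARD('a)"
  define X where "X = {x\<in>vsp {..<k}. enc k cols x \<in> D}"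
  have DX: "D = enc k cols ` X" using D(1) unfolding X_def C1_eq by auto
  have Xsub: "X \<subseteq> vsp {..<k}" by (auto simp: X_def)
  have subX: "subsp X"
    unfolding subsp_def
  proof (intro conjI ballI allI)
    show "Z \<in> X" using D(2) enc_zero by (auto simp: X_def lin_code_def vsp_def)
  next
    fix x y assume "x \<in> X" "y \<in> X"
    then show "(\<lambda>i. x i + y i) \<in> X" using D(2) enc_add[of x y] by (auto simp: X_def lin_code_def vsp_def)
  next
    fix l x assume "x \<in> X"
    then show "(\<lambda>i. l * x i) \<in> X" using D(2) enc_smul[of l x] by (auto simp: X_def lin_code_def vsp_def)
  qed
  have cX: "card X = ?q ^ r"
  proof -
    have "card D = card X" unfolding DX by (rule card_image) (rule inj_on_subset[OF enc_inj Xsub])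
    then show ?thesis using hasdim_card(1)[OF D(3)] by simp
  qed
  have P: "card (perpk k X) = ?q ^ (k - r)" by (rule perp_exact[OF Xsub subX cX r])
  have S: "(\<Sum>i\<in>{1..h}. int ?q ^ u - int (card (perpk k X \<inter> B i))) \<le> int h * (int ?q ^ u - int ?q ^ (u - min r u))"
  proof -
    have "(\<Sum>i\<in>{1..h}. int ?q ^ u - int (card (perpk k X \<inter> B i))) \<le> (\<Sum>i\<in>{1..h}. int ?q ^ u - int ?q ^ (u - min r u))"
    proof (rule sum_mono)
      fix i assume "i \<in> {1..h}"
      then have "card (perpk k X \<inter> B i) \<ge> ?q ^ (u - min r u)" by (rule pi_bound[OF Xsub subX cX])
      then show "int ?q ^ u - int (card (perpk k X \<inter> B i)) \<le> int ?q ^ u - int ?q ^ (u - min r u)"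
        by (metis diff_left_mono of_nat_le_iff of_nat_power)
    qed
    then show ?thesis by simp
  qed
  have "int (card (code_support n D)) * (int ?q - 1) = int ?q ^ k - int (card (perpk k X)) - (\<Sum>i\<in>{1..h}. int ?q ^ u - int (card (perpk k X \<inter> B i)))"
    unfolding DX supp_enc by (rule supp_int[OF Xsub])
  then show ?thesis using P S by simp
qed

end


definition Mmap :: "nat \<Rightarrow> nat \<Rightarrow> nat \<Rightarrow> (nat \<Rightarrow> 'a::field) \<Rightarrow> (nat \<Rightarrow> 'a)" where
  "Mmap u h r a = (\<lambda>i. (if i < r then a i else 0) + (if u \<le> i \<and> i < h*u then a (i mod u) else 0))"

lemma linmap_M: "linmap (Mmap u h r)"
  by (auto simp: linmap_def Mmap_def fun_eq_iff algebra_simps)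

context cset2 begin

abbreviation MM :: "nat \<Rightarrow> (nat \<Rightarrow> 'a) \<Rightarrow> (nat \<Rightarrow> 'a)" where "MM r \<equiv> Mmap u h r"


lemma M_vsp: "a \<in> vsp {..<r} \<Longrightarrow> r \<le> k \<Longrightarrow> MM r a \<in> vsp {..<k}"
  using khu by (auto simp: vsp_def Mmap_def)

lemma M_eval: "a \<in> vsp {..<r} \<Longrightarrow> MM r a i = a i + (if u \<le> i \<and> i < h*u then a (i mod u) else 0)"
  by (auto simp: Mmap_def vsp_def)

lemma M_recover:
  assumes a: "a \<in> vsp {..<r}"
  shows "(if i < u then MM r a i else MM r a i - (if i < h*u then MM r a (i mod u) else 0)) = a i"
proof -
  have u0: "u > 0" using u2 by simp
  have m: "i mod u < u" using u0 by simp
  show ?thesis using M_eval[OF a, of i] M_eval[OF a, of "i mod u"] m by auto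
qed

lemma M_inj: "inj_on (MM r) (vsp {..<r})"
proof (rule inj_onI)
  fix a b :: "nat \<Rightarrow> 'a" assume a: "a \<in> vsp {..<r}" and b: "b \<in> vsp {..<r}" and e: "MM r a = MM r b"
  show "a = b"
  proof (rule ext)
    fix i show "a i = b i" using M_recover[OF a, of i] M_recover[OF b, of i] by (metis e)
  qed
qed

lemma M_restr_card:
  assumes i: "i \<in> {1..h}" and r: "r \<le> k"
  shows "card (restr (blk u i) ` MM r ` vsp {..<r}) \<ge> CARD('a) ^ min r u"
proof -
  let ?m = "min r u"
  let ?F = "\<lambda>a. restr (blk u i) (MM r a)"
  let ?G = "\<lambda>y. (\<lambda>t. if t < ?m then y ((i - 1) * u + t) else 0) :: nat \<Rightarrow> 'a"
  have iu: "i * u \<le> h * u" using i by (simp add: mult_le_mono1)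
  have inj: "inj_on ?F (vsp {..<?m})"
  proof (rule inj_on_inverseI)
    fix a :: "nat \<Rightarrow> 'a" assume a: "a \<in> vsp {..<?m}"
    have ar: "a \<in> vsp {..<r}" using a by (auto simp: vsp_def)
    show "?G (?F a) = a"
    proof
      fix t
      show "?G (?F a) t = a t"
      proof (cases "t < ?m")
        case False then show ?thesis using a by (auto simp: vsp_def)
      next
        case True
        let ?j = "(i - 1) * u + t"
        have tu: "t < u" "t < r" using True by auto
        have iu1: "i * u = (i - 1) * u + u" using i by (cases i) auto
        have jb: "?j \<in> blk u i" using tu iu1 unfolding blk_def by simp
        have "MM r a ?j = a t"
        proof (cases "i = 1")
          case True
          then show ?thesis using M_eval[OF ar, of ?j] tu by simp
        next
          case False
          then have i2: "i \<ge> 2" using i by auto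
          have "1 \<le> i - 1" using i2 by simp
          from mult_le_mono1[OF this, of u] have h1: "u \<le> (i - 1) * u" by simp
          have ju: "?j \<ge> u" using h1 by linarith
          have "?j < i * u" using jb by (simp add: blk_def)
          then have jhu: "?j < h * u" using iu by linarith
          have jm: "?j mod u = t" using tu by simp
          have "a ?j = 0" using a ju tu by (auto simp: vsp_def)
          then show ?thesis using M_eval[OF ar, of ?j] ju jhu jm by simp
        qed
        then show ?thesis using True jb by (simp add: restr_def)
      qed
    qed
  qed
  have sub: "?F ` vsp {..<?m} \<subseteq> restr (blk u i) ` MM r ` vsp {..<r}"
    by (auto simp: vsp_def)
  have fin: "finite (restr (blk u i) ` MM r ` vsp {..<r})"
    using card_vsp(2)[of "{..<r}", where 'a='a] by simp
  have "card (?F ` vsp {..<?m}) = CARD('a) ^ ?m"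
    using card_image[OF inj] card_vsp(1)[of "{..<?m}", where 'a='a] by simp
  then show ?thesis using card_mono[OF fin sub] by simp
qed

end


context cset2 begin

lemma subsp_MM: "subsp (MM r ` vsp {..<r})"
  unfolding subsp_def
proof (intro conjI ballI allI)
  have lM: "linmap (MM r)" by (rule linmap_M)
  have hadd: "\<And>x y. MM r (\<lambda>i. x i + y i) = (\<lambda>i. MM r x i + MM r y i)" using lM by (simp add: linmap_def)
  show "Z \<in> MM r ` vsp {..<r}" using linmap_zero[OF lM] by (intro image_eqI[of _ _ Z]) (auto simp: vsp_def)
  fix a b assume "a \<in> MM r ` vsp {..<r}" "b \<in> MM r ` vsp {..<r}"
  then obtain x y where "x \<in> vsp {..<r}" "y \<in> vsp {..<r}" "a = MM r x" "b = MM r y" by auto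
  then show "(\<lambda>i. a i + b i) \<in> MM r ` vsp {..<r}"
    using hadd[of x y] by (intro image_eqI[of _ _ "\<lambda>i. x i + y i"]) (auto simp: vsp_def)
next
  have lM: "linmap (MM r)" by (rule linmap_M)
  have hsmul: "\<And>c x. MM r (\<lambda>i. c * x i) = (\<lambda>i. c * MM r x i)" using lM by (simp add: linmap_def)
  fix l a assume "a \<in> MM r ` vsp {..<r}"
  then obtain x where "x \<in> vsp {..<r}" "a = MM r x" by auto
  then show "(\<lambda>i. l * a i) \<in> MM r ` vsp {..<r}"
    using hsmul[of l x] by (intro image_eqI[of _ _ "\<lambda>i. l * x i"]) (auto simp: vsp_def)
qed

lemma ghw_achieve:
  assumes r: "r \<le> k"
  shows "\<exists>D. D \<subseteq> C1 \<and> lin_code n D \<and> has_dim D r \<and>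
    int (card (code_support n D)) * (int CARD('a) - 1) = int CARD('a) ^ k - int CARD('a) ^ (k - r) - int h * (int CARD('a) ^ u - int CARD('a) ^ (u - min r u))"
proof -
  let ?q = "CARD('a)" let ?m = "min r u"
  let ?X = "MM r ` vsp {..<r}"
  let ?D = "enc k cols ` ?X"
  have Xsub: "?X \<subseteq> vsp {..<k}" using M_vsp r by auto
  have lin: "linmap (enc k cols \<circ> MM r)" by (rule linmap_comp[OF linmap_enc linmap_M])
  have injc: "inj_on (enc k cols \<circ> MM r) (vsp {..<r})"
    by (rule comp_inj_on[OF M_inj inj_on_subset[OF enc_inj Xsub]])
  have Deq: "?D = (enc k cols \<circ> MM r) ` vsp {..<r}" by (simp add: image_comp)
  have cX: "card ?X = ?q ^ r" using card_image[OF M_inj] card_vsp(1)[of "{..<r}", where 'a='a] by simp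
  have DC: "?D \<subseteq> C1" unfolding C1_eq using Xsub by auto
  have lc: "lin_code n ?D" unfolding Deq
    by (rule lin_code_image[OF lin]) (auto simp: enc_def vecs_def)
  have hd: "has_dim ?D r" unfolding Deq by (rule hasdim_image[OF lin injc])
  have P: "card (perpk k ?X) = ?q ^ (k - r)" by (rule perp_exact[OF Xsub subsp_MM cX r])
  have Pi: "card (perpk k ?X \<inter> B i) = ?q ^ (u - ?m)" if i: "i \<in> {1..h}" for i
  proof -
    have e: "card (restr (blk u i) ` ?X) * card (perpk k ?X \<inter> B i) = ?q ^ u" by (rule perp_blk[OF Xsub subsp_MM i])
    have g: "card (restr (blk u i) ` ?X) \<ge> ?q ^ ?m" by (rule M_restr_card[OF i r])
    have lo: "card (perpk k ?X \<inter> B i) \<ge> ?q ^ (u - ?m)" by (rule pi_bound[OF Xsub subsp_MM cX i])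
    have "?q ^ ?m * card (perpk k ?X \<inter> B i) \<le> card (restr (blk u i) ` ?X) * card (perpk k ?X \<inter> B i)"
      using g by (rule mult_le_mono1)
    also have "... = ?q ^ ?m * ?q ^ (u - ?m)" using e by (simp flip: power_add)
    finally have "card (perpk k ?X \<inter> B i) \<le> ?q ^ (u - ?m)" using q2 by simp
    then show ?thesis using lo by simp
  qed
  have S: "(\<Sum>i\<in>{1..h}. int ?q ^ u - int (card (perpk k ?X \<inter> B i))) = int h * (int ?q ^ u - int ?q ^ (u - ?m))"
  proof -
    have "(\<Sum>i\<in>{1..h}. int ?q ^ u - int (card (perpk k ?X \<inter> B i))) = (\<Sum>i\<in>{1..h}. int ?q ^ u - int ?q ^ (u - ?m))"
      by (rule sum.cong[OF refl]) (simp add: Pi)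
    then show ?thesis by simp
  qed
  have "int (card (code_support n ?D)) * (int ?q - 1) = int ?q ^ k - int (card (perpk k ?X)) - (\<Sum>i\<in>{1..h}. int ?q ^ u - int (card (perpk k ?X \<inter> B i)))"
    unfolding supp_enc by (rule supp_int[OF Xsub])
  then have "int (card (code_support n ?D)) * (int ?q - 1) = int ?q ^ k - int ?q ^ (k - r) - int h * (int ?q ^ u - int ?q ^ (u - ?m))"
    using P S by simp
  then show ?thesis using DC lc hd by blast
qed

lemma ghw_value:
  assumes r: "r \<le> k"
  shows "int (ghw n C1 r) * (int CARD('a) - 1) = int CARD('a) ^ k - int CARD('a) ^ (k - r) - int h * (int CARD('a) ^ u - int CARD('a) ^ (u - min r u))"
proof -
  let ?V = "int CARD('a) ^ k - int CARD('a) ^ (k - r) - int h * (int CARD('a) ^ u - int CARD('a) ^ (u - min r u))"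
  let ?S = "{card (code_support n D) | D. D \<subseteq> C1 \<and> lin_code n D \<and> has_dim D r}"
  obtain D0 where D0: "D0 \<subseteq> C1" "lin_code n D0" "has_dim D0 r" "int (card (code_support n D0)) * (int CARD('a) - 1) = ?V"
    using ghw_achieve[OF r] by blast
  have qp: "int CARD('a) - 1 > 0" using q2 by simp
  have "Min ?S = card (code_support n D0)"
  proof (rule Min_eqI)
    have "?S \<subseteq> {..n}"
    proof
      fix y assume "y \<in> ?S"
      then obtain D :: "(nat \<Rightarrow> 'a) set" where "y = card (code_support n D)" by blast
      moreover have "card (code_support n D) \<le> card {..<n}"
        by (rule card_mono) (auto simp: code_support_def)
      ultimately show "y \<in> {..n}" by simp
    qed
    then show "finite ?S" by (rule finite_subset) simp
    show "card (code_support n D0) \<in> ?S" using D0 by blast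
    fix y assume "y \<in> ?S"
    then obtain D :: "(nat \<Rightarrow> 'a) set" where D: "y = card (code_support n D)" "D \<subseteq> C1" "lin_code n D" "has_dim D r" by blast
    have "int (card (code_support n D0)) * (int CARD('a) - 1) \<le> int y * (int CARD('a) - 1)"
      using ghw_lower[OF D(2-4) r] D0(4) D(1) by simp
    then have "int (card (code_support n D0)) \<le> int y" using qp by (simp add: mult_le_cancel_right)
    then show "card (code_support n D0) \<le> y" by simp
  qed
  then have "ghw n C1 r = card (code_support n D0)" by (simp add: ghw_def)
  then show ?thesis using D0(4) by simp
qed

end


lemma ldi_dvd:
  fixes q h :: nat
  assumes "m \<le> least_digit_index q h"
  shows "q ^ m dvd h"
  using assms
proof (induction m)
  case 0 show ?case by simp
next
  case (Suc m)
  then have m_lt: "m < least_digit_index q h" by simp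
  then have "\<not> ((h div q^m) mod q > 0)" unfolding least_digit_index_def by (rule not_less_Least)
  then have "(h div q^m) mod q = 0" by simp
  then obtain c where c: "h div q^m = q * c" by (metis dvd_def mod_0_imp_dvd)
  have "q^m dvd h" using Suc m_lt by simp
  then have "h = q^m * (h div q^m)" by simp
  also have "... = q ^ Suc m * c" using c by (simp add: mult.assoc)
  finally show ?case by simp
qed

lemma div_pred_le:
  fixes h Q :: nat
  assumes "Q > 0" "Q dvd h" "h > 0"
  shows "(h - 1) div Q + 1 \<le> h div Q"
proof -
  obtain c where c: "h = Q * c" using assms(2) by (auto simp: dvd_def)
  then have c1: "c \<ge> 1" using assms(3) by (cases c) auto
  have e: "h - 1 = (Q - 1) + Q * (c - 1)" using c c1 assms(1) by (simp add: algebra_simps diff_mult_distrib2)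
  have "((Q - 1) + Q * (c - 1)) div Q = (c - 1) + (Q - 1) div Q" by (rule div_mult_self2) (use assms(1) in simp)
  then have "(h - 1) div Q = (c - 1) + (Q - 1) div Q" by (simp only: e)
  also have "(Q - 1) div Q = 0" using assms(1) by simp
  finally show ?thesis using c c1 assms(1) by simp
qed

lemma sum_pred_bound:
  fixes q h u k :: nat
  assumes q2: "q \<ge> 2" and h0: "h > 0" and u1: "u \<ge> 1" and khu: "h*u \<le> k"
    and cond: "least_digit_index q h + u > (\<Sum>i=1..k-u. h div q^i)"
  shows "(\<Sum>i=1..k-u. (h - 1) div q^i) < u"
proof -
  let ?v = "least_digit_index q h"
  have "1 * u \<le> h * u" using h0 by (intro mult_le_mono1) simp
  then have uk: "u \<le> k" using khu by linarith
  have vle: "?v \<le> k - u"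
  proof (rule ccontr)
    assume "\<not> ?v \<le> k - u"
    then have "k - u + 1 \<le> ?v" by simp
    then have "q^(k-u+1) dvd h" by (rule ldi_dvd)
    then have a: "q^(k-u+1) \<le> h" using h0 by (simp add: dvd_imp_le)
    have b: "2^(k-u+1) \<le> q^(k-u+1)" using q2 by (rule power_mono) simp
    have c: "k - u + 1 < 2^(k-u+1)" by (rule less_exp)
    have hs: "k - u + 2 \<le> h" using a b c by linarith
    have "(k - u + 1) * u \<le> (h - 1) * u" using hs by (intro mult_le_mono1) simp
    also have "(h - 1) * u = h * u - u" by (simp add: diff_mult_distrib)
    also have "... \<le> k - u" using khu by simp
    finally have "(k - u + 1) * u \<le> k - u" .
    moreover have "(k - u + 1) * u \<ge> k - u + 1" using u1 mult_le_mono2[of 1 u "k - u + 1"] by simp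
    ultimately show False by simp
  qed
  have trm: "(h - 1) div q^m + (if m \<le> ?v then 1 else 0) \<le> h div q^m" for m
  proof (cases "m \<le> ?v")
    case True
    then have "q^m dvd h" by (rule ldi_dvd)
    then show ?thesis using True div_pred_le[of "q^m" h] q2 h0 by simp
  next
    case False
    then show ?thesis by (simp add: div_le_mono)
  qed
  have "(\<Sum>i=1..k-u. (h - 1) div q^i) + (\<Sum>i=1..k-u. (if i \<le> ?v then 1 else 0)) \<le> (\<Sum>i=1..k-u. h div q^i)"
    unfolding sum.distrib[symmetric] by (rule sum_mono) (rule trm)
  moreover have "(\<Sum>i=1..k-u. (if i \<le> ?v then 1 else (0::nat))) = ?v"
  proof -
    have "(\<Sum>i=1..k-u. (if i \<le> ?v then 1 else (0::nat))) = card {i\<in>{1..k-u}. i \<le> ?v}"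
      by (simp add: sum.If_cases Int_def)
    also have "{i\<in>{1..k-u}. i \<le> ?v} = {1..?v}" using vle by auto
    finally show ?thesis by simp
  qed
  ultimately show ?thesis using cond by simp
qed

lemma geom_int: "(int q - 1) * (\<Sum>i<m. int q ^ i) = int q ^ m - 1"
proof (induction m)
  case 0 then show ?case by simp
next
  case (Suc m)
  have "(int q - 1) * (\<Sum>i<Suc m. int q ^ i) = (int q - 1) * (\<Sum>i<m. int q^i) + (int q - 1) * int q^m"
    by (simp add: distrib_left)
  also have "... = int q^m - 1 + (int q - 1) * int q^m" using Suc by simp
  also have "... = int q ^ Suc m - 1" by (simp add: algebra_simps)
  finally show ?case .
qed

lemma div_ceil_ge: "(d::nat) > 0 \<Longrightarrow> x \<le> ((x + d - 1) div d) * d"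
proof -
  assume d: "d > 0"
  have "x + d - 1 = (x + d - 1) div d * d + (x + d - 1) mod d" by simp
  moreover have "(x + d - 1) mod d < d" using d by simp
  ultimately show ?thesis by linarith
qed



lemma griesmer_arith:
  fixes q k u h n :: nat
  assumes q2: "q \<ge> 2" and u2: "u \<ge> 2" and h0: "h > 0" and khu: "h*u \<le> k"
    and dpos: "h * q^(u-1) < q^(k-1)"
    and cond: "least_digit_index q h + u > (\<Sum>i=1..k-u. h div q^i)"
    and nq: "int n * (int q - 1) = int q^k - 1 - int h * (int q^u - 1)"
  shows "n < (\<Sum>i<k. ((q^(k-1) - h*q^(u-1) + 1) + q^i - 1) div q^i)"
proof -
  define D where "D = q^(k-1) - h*q^(u-1) + 1"
  define t where "t i = (D + q^i - 1) div q^i" for i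
  define f where "f i = (h - 1) div q^(i - u + 1)" for i
  have "1 * u \<le> h * u" using h0 by (intro mult_le_mono1) simp
  then have uk: "u \<le> k" using khu by linarith
  have qp: "q^i > 0" for i using q2 by simp
  have tA: "int (t i) = int q^(k-1-i) - int h * int q^(u-1-i) + 1" if i: "i < u" for i
  proof -
    let ?a = "q^(k-1-i)" let ?b = "q^(u-1-i)" let ?Q = "q^i"
    have e1: "q^(k-1) = ?Q * ?a" using i uk by (simp flip: power_add)
    have e2: "q^(u-1) = ?Q * ?b" using i by (simp flip: power_add)
    have "?Q * (h * ?b) < ?Q * ?a" using dpos e1 e2 by (simp add: algebra_simps)
    then have lt: "h * ?b < ?a" by simp
    have "int (D + ?Q - 1) = int (?Q * (?a - h * ?b + 1))"
    proof -
      have "int D = int ?Q * int ?a - int h * (int ?Q * int ?b) + 1"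
        unfolding D_def using dpos e1 e2 by (simp add: of_nat_diff)
      moreover have "int (?Q * (?a - h * ?b + 1)) = int ?Q * (int ?a - int h * int ?b + 1)"
      proof -
        have "int (?a - h * ?b + 1) = int ?a - int h * int ?b + 1" using lt by (simp add: of_nat_diff)
        then show ?thesis by (simp only: of_nat_mult)
      qed
      moreover have "int (D + ?Q - 1) = int D + int ?Q - 1"
      proof -
        have "1 \<le> D + ?Q" using qp[of i] by linarith
        then show ?thesis by (simp add: of_nat_diff)
      qed
      ultimately show ?thesis by (simp add: algebra_simps)
    qed
    then have "D + ?Q - 1 = ?Q * (?a - h * ?b + 1)" by (simp only: of_nat_eq_iff)
    then have "t i = ?a - h * ?b + 1" unfolding t_def using qp[of i] by simp
    then show ?thesis using lt by (simp add: of_nat_diff)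
  qed
  have tB: "int (t i) + int (f i) \<ge> int q^(k-1-i)" if i: "u \<le> i" "i < k" for i
  proof -
    let ?Q = "q^i" let ?R = "q^(i-u+1)"
    have c1: "D \<le> t i * ?Q" using div_ceil_ge[OF qp, of D] unfolding t_def .
    have c2: "h \<le> (f i + 1) * ?R"
    proof -
      have "h - 1 = (h - 1) div ?R * ?R + (h - 1) mod ?R" by (rule div_mult_mod_eq[symmetric])
      moreover have "(h - 1) mod ?R < ?R" by (rule mod_less_divisor[OF qp])
      ultimately have "h - 1 < (f i + 1) * ?R" unfolding f_def by (simp add: algebra_simps)
      then show ?thesis by simp
    qed
    have ex: "(i - u + 1) + (u - 1) = i" using i u2 by simp
    have e: "?Q = ?R * q^(u-1)" by (simp only: power_add[symmetric] ex)
    have c3: "h * q^(u-1) \<le> (f i + 1) * ?Q"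
    proof -
      have "h * q^(u-1) \<le> (f i + 1) * ?R * q^(u-1)" by (rule mult_le_mono1[OF c2])
      also have "... = (f i + 1) * ?Q" by (simp only: e mult.assoc)
      finally show ?thesis .
    qed
    have "D + h * q^(u-1) = q^(k-1) + 1" unfolding D_def using dpos by simp
    then have "q^(k-1) < t i * ?Q + (f i + 1) * ?Q" using c1 c3 by linarith
    also have "... = (t i + f i + 1) * ?Q" by (simp add: algebra_simps)
    finally have lt: "q^(k-1) < (t i + f i + 1) * ?Q" .
    have "q^(k-1) = q^(k-1-i) * ?Q" using i by (simp flip: power_add)
    then have "q^(k-1-i) * ?Q < (t i + f i + 1) * ?Q" using lt by simp
    then have "q^(k-1-i) < t i + f i + 1" by (simp only: mult_less_cancel2)
    then have "q^(k-1-i) \<le> t i + f i" by simp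
    then have "int (q^(k-1-i)) \<le> int (t i + f i)" by (simp only: of_nat_le_iff)
    then show ?thesis by (simp only: of_nat_add of_nat_power)
  qed
  have dj: "{..<u} \<inter> {u..<k} = {}" by auto
  have un: "{..<u} \<union> {u..<k} = {..<k}" using uk by auto
  have split: "(\<Sum>i<k. g i) = (\<Sum>i<u. g i) + (\<Sum>i\<in>{u..<k}. g i)" for g :: "nat \<Rightarrow> int"
    by (subst un[symmetric], rule sum.union_disjoint) auto
  have splitn: "(\<Sum>i<k. t i) = (\<Sum>i<u. t i) + (\<Sum>i\<in>{u..<k}. t i)"
    by (subst un[symmetric], rule sum.union_disjoint) auto
  have SA: "int (\<Sum>i<u. t i) = (\<Sum>i<u. int q^(k-1-i)) - int h * (\<Sum>i<u. int q^(u-1-i)) + int u"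
  proof -
    have "int (\<Sum>i<u. t i) = (\<Sum>i<u. int q^(k-1-i) - int h * int q^(u-1-i) + 1)"
      unfolding of_nat_sum by (rule sum.cong) (auto simp: tA)
    also have "... = (\<Sum>i<u. int q^(k-1-i)) - int h * (\<Sum>i<u. int q^(u-1-i)) + int u"
      by (simp add: sum.distrib sum_subtractf sum_distrib_left)
    finally show ?thesis .
  qed
  have SB: "int (\<Sum>i\<in>{u..<k}. t i) \<ge> (\<Sum>i\<in>{u..<k}. int q^(k-1-i)) - (\<Sum>i\<in>{u..<k}. int (f i))"
  proof -
    have "(\<Sum>i\<in>{u..<k}. int q^(k-1-i) - int (f i)) \<le> (\<Sum>i\<in>{u..<k}. int (t i))"
    proof (rule sum_mono)
      fix i assume "i \<in> {u..<k}"
      then have "int q^(k-1-i) \<le> int (t i) + int (f i)" using tB by simp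
      then show "int q^(k-1-i) - int (f i) \<le> int (t i)" by linarith
    qed
    then show ?thesis by (simp add: sum_subtractf)
  qed
  have Gk: "(\<Sum>i<k. int q^(k-1-i)) = (\<Sum>i<k. int q^i)"
  proof -
    have "(\<Sum>i<k. int q^(k-1-i)) = (\<Sum>i<k. (\<lambda>j. int q^j) (k - Suc i))" by simp
    also have "... = (\<Sum>i<k. int q^i)" by (rule sum.nat_diff_reindex)
    finally show ?thesis .
  qed
  have Gu: "(\<Sum>i<u. int q^(u-1-i)) = (\<Sum>i<u. int q^i)"
  proof -
    have "(\<Sum>i<u. int q^(u-1-i)) = (\<Sum>i<u. (\<lambda>j. int q^j) (u - Suc i))" by simp
    also have "... = (\<Sum>i<u. int q^i)" by (rule sum.nat_diff_reindex)
    finally show ?thesis .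
  qed
  have F: "(\<Sum>i\<in>{u..<k}. f i) = (\<Sum>m=1..k-u. (h - 1) div q^m)"
    unfolding f_def
    by (rule sum.reindex_bij_witness[where i = "\<lambda>m. m + u - 1" and j = "\<lambda>i. i - u + 1"]) (use u2 in auto)
  have Flt: "(\<Sum>i\<in>{u..<k}. f i) < u"
    unfolding F using sum_pred_bound[OF q2 h0 _ khu cond] u2 by simp
  have qi: "int q - 1 > 0" using q2 by simp
  have geomk: "(int q - 1) * (\<Sum>i<k. int q^i) = int q^k - 1" by (rule geom_int)
  have geomu: "(int q - 1) * (\<Sum>i<u. int q^i) = int q^u - 1" by (rule geom_int)
  have low: "int (\<Sum>i<k. t i) \<ge> (\<Sum>i<k. int q^i) - int h * (\<Sum>i<u. int q^i) + int u - int (\<Sum>i\<in>{u..<k}. f i)"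
    using SA SB split[of "\<lambda>i. int q^(k-1-i)"] Gk Gu splitn by (simp add: of_nat_sum)
  have "int u - int (\<Sum>i\<in>{u..<k}. f i) \<ge> 1" using Flt by linarith
  then have "(int q - 1) * int (\<Sum>i<k. t i) \<ge> (int q - 1) * ((\<Sum>i<k. int q^i) - int h * (\<Sum>i<u. int q^i) + 1)"
    using low qi by (intro mult_left_mono) auto
  also have "(int q - 1) * ((\<Sum>i<k. int q^i) - int h * (\<Sum>i<u. int q^i) + 1) = (int q - 1) * (\<Sum>i<k. int q^i) - int h * ((int q - 1) * (\<Sum>i<u. int q^i)) + (int q - 1)"
    by (simp add: algebra_simps)
  also have "... = int q^k - 1 - int h * (int q^u - 1) + (int q - 1)"
    by (simp only: geomk geomu)
  also have "... = (int q - 1) * (int n + 1)" using nq by (simp add: algebra_simps)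
  finally have "(int q - 1) * (int n + 1) \<le> (int q - 1) * int (\<Sum>i<k. t i)" .
  then have "int n + 1 \<le> int (\<Sum>i<k. t i)" using qi by (simp add: mult_le_cancel_left)
  then have "int n < int (\<Sum>i<k. t i)" by linarith
  then have "n < (\<Sum>i<k. t i)" by (simp only: of_nat_less_iff)
  then show ?thesis unfolding t_def D_def .
qed



theorem theorem2p4:
  fixes cols :: "(nat \<Rightarrow> 'a::{finite,field}) list"
    and k u h :: nat
  defines "q \<equiv> card (UNIV :: 'a set)"
  assumes "k > 0" and "u \<ge> 2" and "h > 0" and "k \<ge> h * u"
    and "q ^ k - q ^ (k - 1) > h * (q ^ u - 1)"
    and "least_digit_index q h + u > (\<Sum>i=1..k-u. h div q ^ i)"
    and "proj_reps (U_set k u h) cols"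
  shows "real (length cols) = ((real q ^ k - 1) - real h * (real q ^ u - 1)) / (real q - 1)
    \<and> int (min_dist (length cols) (gen_code k cols)) = int q ^ (k - 1) - int h * int q ^ (u - 1)
    \<and> distance_optimal (length cols) k (min_dist (length cols) (gen_code k cols)) (gen_code k cols)
    \<and> card {c \<in> gen_code k cols. hweight (length cols) c = 0} = 1
    \<and> card {c \<in> gen_code k cols. hweight (length cols) c = q ^ (k - 1)} = q ^ (k - h * u) - 1
    \<and> (\<forall>j\<in>{1..h}. card {c \<in> gen_code k cols.
           int (hweight (length cols) c) = int q ^ (k - 1) - int j * int q ^ (u - 1)}
         = (h choose j) * (q ^ u - 1) ^ j * q ^ (k - h * u))
    \<and> (\<forall>c \<in> gen_code k cols. hweight (length cols) c = 0 \<or> hweight (length cols) c = q ^ (k - 1) \<or>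
         (\<exists>j\<in>{1..h}. int (hweight (length cols) c) = int q ^ (k - 1) - int j * int q ^ (u - 1)))
    \<and> (\<forall>r\<in>{1..u}. real (ghw (length cols) (gen_code k cols) r)
         = ((real q ^ k - real q ^ (k - r)) - real h * (real q ^ u - real q ^ (u - r))) / (real q - 1))
    \<and> (\<forall>r\<in>{u..k}. real (ghw (length cols) (gen_code k cols) r)
         = ((real q ^ k - real q ^ (k - r)) - real h * (real q ^ u - 1)) / (real q - 1))"
proof -
  have qq: "q = CARD('a)" by (simp add: q_def)
  interpret cset2 cols k u h
    by unfold_locales (use assms(2-8) in \<open>simp_all add: qq\<close>)
  let ?n = "length cols"
  let ?C = "gen_code k cols"
  have q2': "q \<ge> 2" using q2 qq by simp
  have qr: "real q - 1 \<noteq> 0" using q2' by simp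
  have uk: "u \<le> k"
  proof -
    have "1 * u \<le> h * u" using assms(4) by (intro mult_le_mono1) simp
    then show ?thesis using assms(5) by linarith
  qed
  have c1: "real ?n = ((real q ^ k - 1) - real h * (real q ^ u - 1)) / (real q - 1)"
    using length_formula qq by simp
  have c2: "int (min_dist ?n ?C) = int q ^ (k - 1) - int h * int q ^ (u - 1)"
    using min_dist_C1 qq by simp
  have dpos': "h * q ^ (u - 1) < q ^ (k - 1)"
  proof -
    have "int (h * q ^ (u - 1)) < int (q ^ (k - 1))" using d_pos qq by simp
    then show ?thesis by (simp only: of_nat_less_iff)
  qed
  have dnat: "min_dist ?n ?C = q ^ (k - 1) - h * q ^ (u - 1)"
  proof -
    have "int (min_dist ?n ?C) = int (q ^ (k - 1) - h * q ^ (u - 1))"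
      using c2 dpos' by (simp add: of_nat_diff)
    then show ?thesis by (simp only: of_nat_eq_iff)
  qed
  have nq: "int ?n * (int q - 1) = int q ^ k - 1 - int h * (int q ^ u - 1)"
  proof -
    have "card {j. j < ?n \<and> True} * (CARD('a) - 1) = card {v\<in>U. True}"
      by (rule count_classes) simp
    then have a: "?n * (q - 1) = card U" using qq by simp
    have b: "card U + 1 + h * (q ^ u - 1) = q ^ k" using card_U qq by simp
    have a': "int ?n * (int q - 1) = int (card U)" using arg_cong[OF a, of int] q2' by (simp add: of_nat_diff)
    have "q ^ u \<ge> 1" using q2' by simp
    then have b': "int (card U) + 1 + int h * (int q ^ u - 1) = int q ^ k" using arg_cong[OF b, of int] by (simp add: of_nat_diff)
    show ?thesis using a' b' by simp
  qed
  have c3: "distance_optimal ?n k (min_dist ?n ?C) ?C"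
    unfolding distance_optimal_def
  proof (intro conjI notI)
    show "is_nkd_code ?n k (min_dist ?n ?C) ?C"
      unfolding is_nkd_code_def using lin_code_C1 hasdim_C1 by simp
  next
    assume "\<exists>(C'::(nat \<Rightarrow> 'a) set) d'. d' \<ge> min_dist ?n ?C + 1 \<and> is_nkd_code ?n k d' C'"
    then obtain C' :: "(nat \<Rightarrow> 'a) set" and d' where d': "d' \<ge> min_dist ?n ?C + 1" and nkd: "is_nkd_code ?n k d' C'"
      by blast
    have lc: "lin_code ?n C'" and hd: "has_dim C' k" and md: "min_dist ?n C' = d'"
      using nkd by (auto simp: is_nkd_code_def)
    have sub: "C' \<subseteq> vsp {..<?n}" using lc by (auto simp: lin_code_def vecs_vsp)
    have ss: "subsp C'" using lc by (simp add: lin_code_def subsp_def)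
    have cC: "card C' = CARD('a) ^ k" by (rule hasdim_card(1)[OF hd])
    have finC: "finite C'" by (rule hasdim_card(2)[OF hd])
    have d'1: "d' \<ge> 1" using d' by simp
    have wts: "\<forall>c\<in>C'. c \<noteq> (\<lambda>i. 0) \<longrightarrow> d' \<le> card {j\<in>{..<?n}. c j \<noteq> 0}"
    proof (intro ballI impI)
      fix c assume c: "c \<in> C'" "c \<noteq> (\<lambda>i. 0)"
      have "Min (hweight ?n ` (C' - {\<lambda>i. 0})) \<le> hweight ?n c"
        using finC c by (intro Min_le) auto
      then have "d' \<le> hweight ?n c" using md by (simp add: min_dist_def)
      moreover have "{j\<in>{..<?n}. c j \<noteq> 0} = {i. i < ?n \<and> c i \<noteq> 0}" by auto
      ultimately show "d' \<le> card {j\<in>{..<?n}. c j \<noteq> 0}" by (simp add: hweight_def)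
    qed
    have g: "(\<Sum>i<k. (d' + CARD('a)^i - 1) div CARD('a)^i) \<le> card {..<?n}"
      by (rule griesmer[OF _ sub ss cC _ d'1 wts]) (use k0 in auto)
    have mono: "(\<Sum>i<k. ((q ^ (k - 1) - h * q ^ (u - 1) + 1) + q^i - 1) div q^i) \<le> (\<Sum>i<k. (d' + q^i - 1) div q^i)"
    proof (intro sum_mono div_le_mono)
      fix i
      have "q ^ i \<ge> 1" using q2' by simp
      then show "(q ^ (k - 1) - h * q ^ (u - 1) + 1) + q^i - 1 \<le> d' + q^i - 1" using d' dnat by linarith
    qed
    have "?n < (\<Sum>i<k. ((q ^ (k - 1) - h * q ^ (u - 1) + 1) + q^i - 1) div q^i)"
      by (rule griesmer_arith[OF q2' u2 h0 _ dpos' assms(7) nq]) (use assms(5) in simp)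
    then show False using mono g qq by simp
  qed
  have c4: "card {c \<in> ?C. hweight ?n c = 0} = 1" by (rule card_w0)
  have c5: "card {c \<in> ?C. hweight ?n c = q ^ (k - 1)} = q ^ (k - h * u) - 1" using card_wq qq by simp
  have c6: "\<forall>j\<in>{1..h}. card {c \<in> ?C. int (hweight ?n c) = int q ^ (k - 1) - int j * int q ^ (u - 1)}
         = (h choose j) * (q ^ u - 1) ^ j * q ^ (k - h * u)"
    using card_wj qq by simp
  have c7: "\<forall>c \<in> ?C. hweight ?n c = 0 \<or> hweight ?n c = q ^ (k - 1) \<or>
         (\<exists>j\<in>{1..h}. int (hweight ?n c) = int q ^ (k - 1) - int j * int q ^ (u - 1))"
    using wt_classes qq by simp
  have greal: "real (ghw ?n ?C r) = ((real q ^ k - real q ^ (k - r)) - real h * (real q ^ u - real q ^ (u - min r u))) / (real q - 1)"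
    if r: "r \<le> k" for r
  proof -
    have "int (ghw ?n ?C r) * (int q - 1) = int q ^ k - int q ^ (k - r) - int h * (int q ^ u - int q ^ (u - min r u))"
      using ghw_value[OF r] qq by simp
    then have "real_of_int (int (ghw ?n ?C r) * (int q - 1)) = real_of_int (int q ^ k - int q ^ (k - r) - int h * (int q ^ u - int q ^ (u - min r u)))"
      by simp
    then have "real (ghw ?n ?C r) * (real q - 1) = (real q ^ k - real q ^ (k - r)) - real h * (real q ^ u - real q ^ (u - min r u))"
      by simp
    then show ?thesis using qr by (simp add: field_simps)
  qed
  have c8: "\<forall>r\<in>{1..u}. real (ghw ?n ?C r)
         = ((real q ^ k - real q ^ (k - r)) - real h * (real q ^ u - real q ^ (u - r))) / (real q - 1)"
  proof
    fix r assume r: "r \<in> {1..u}"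
    then have "r \<le> k" "min r u = r" using uk by auto
    then show "real (ghw ?n ?C r) = ((real q ^ k - real q ^ (k - r)) - real h * (real q ^ u - real q ^ (u - r))) / (real q - 1)"
      using greal by simp
  qed
  have c9: "\<forall>r\<in>{u..k}. real (ghw ?n ?C r)
         = ((real q ^ k - real q ^ (k - r)) - real h * (real q ^ u - 1)) / (real q - 1)"
  proof
    fix r assume r: "r \<in> {u..k}"
    then have "r \<le> k" "min r u = u" by auto
    then show "real (ghw ?n ?C r) = ((real q ^ k - real q ^ (k - r)) - real h * (real q ^ u - 1)) / (real q - 1)"
      using greal by simp
  qed
  show ?thesis using c1 c2 c3 c4 c5 c6 c7 c8 c9 by blast
qed



end
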